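(* Let $(X_1,\dots,X_n)$ be a centered Gaussian vector and assume that for some $r<1$, $$\sum_{j=1,\,j\ne i}^n|\mathbb{E}X_iX_j|\le r\,\mathbb{E}X_i^2,\qquad i=1,\dots,n.$$ Then for every $z>0$, $$\mathbb{P}\Big\{\sup_{j=1}^n|X_j|\le z\Big\}\le\prod_{j=1}^n\mathbb{P}\Big\{|X_j|\le\frac{z}{\sqrt{1-r}}\Big\}.$$ *)

theory Defs
  imports "HOL-Probability.Probability"
begin

text \<open>A real random variable is centered Gaussian if it is either almost surely zero
  (degenerate Gaussian of variance 0) or has density of N(0, sigma^2) for some sigma > 0.\<close>
definition centered_gaussian_rv :: "'a measure \<Rightarrow> ('a \<Rightarrow> real) \<Rightarrow> bool" where
  "centered_gaussian_rv M Y \<longleftrightarrow>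
     Y \<in> borel_measurable M \<and>
     ((AE \<omega> in M. Y \<omega> = 0) \<or> (\<exists>\<sigma>>0. distributed M lborel Y (normal_density 0 \<sigma>)))"

definition centered_gaussian_vector :: "'a measure \<Rightarrow> nat \<Rightarrow> (nat \<Rightarrow> 'a \<Rightarrow> real) \<Rightarrow> bool" where
  "centered_gaussian_vector M n X \<longleftrightarrow>
     (\<forall>i<n. X i \<in> borel_measurable M) \<and>
     (\<forall>c :: nat \<Rightarrow> real. centered_gaussian_rv M (\<lambda>\<omega>. \<Sum>i<n. c i * X i \<omega>))"

end

theory Submission
  imports Defs
begin


inductive_set TP :: "(real \<Rightarrow> complex) set" where
  TP_exp: "(\<lambda>x. iexp (s * x)) \<in> TP"
| TP_const: "(\<lambda>x. c) \<in> TP"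
| TP_add: "f \<in> TP \<Longrightarrow> g \<in> TP \<Longrightarrow> (\<lambda>x. f x + g x) \<in> TP"
| TP_mult: "f \<in> TP \<Longrightarrow> g \<in> TP \<Longrightarrow> (\<lambda>x. f x * g x) \<in> TP"

lemma iexp_add: "iexp a * iexp b = iexp (a + b)"
  by (simp add: exp_add[symmetric] distrib_left)

locale twovec = P: prob_space P + Q: prob_space Q
  for P :: "'a measure" and Q :: "'b measure" +
  fixes XX :: "nat \<Rightarrow> 'a \<Rightarrow> real" and UU :: "nat \<Rightarrow> 'b \<Rightarrow> real" and n :: nat
  assumes XXm[measurable]: "\<And>j. XX j \<in> borel_measurable P"
  and UUm[measurable]: "\<And>j. UU j \<in> borel_measurable Q"
  and charEq: "\<And>t. (\<integral>\<omega>. iexp (\<Sum>j<n. t j * XX j \<omega>) \<partial>P) = (\<integral>\<omega>. iexp (\<Sum>j<n. t j * UU j \<omega>) \<partial>Q)"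
begin

definition Good :: "((nat \<Rightarrow> real) \<Rightarrow> complex) \<Rightarrow> bool" where
  "Good \<psi> \<longleftrightarrow> (\<exists>B. \<forall>x. norm (\<psi> x) \<le> B) \<and> (\<lambda>\<omega>. \<psi> (\<lambda>j. XX j \<omega>)) \<in> borel_measurable P
     \<and> (\<lambda>\<omega>. \<psi> (\<lambda>j. UU j \<omega>)) \<in> borel_measurable Q
     \<and> (\<forall>t. (\<integral>\<omega>. \<psi> (\<lambda>j. XX j \<omega>) * iexp (\<Sum>j<n. t j * XX j \<omega>) \<partial>P)
           = (\<integral>\<omega>. \<psi> (\<lambda>j. UU j \<omega>) * iexp (\<Sum>j<n. t j * UU j \<omega>) \<partial>Q))"

lemma Good_intP:
  assumes "Good \<psi>" shows "integrable P (\<lambda>\<omega>. \<psi> (\<lambda>j. XX j \<omega>) * iexp (\<Sum>j<n. t j * XX j \<omega>))"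
proof -
  from assms obtain B where B: "\<forall>x. norm (\<psi> x) \<le> B" and m: "(\<lambda>\<omega>. \<psi> (\<lambda>j. XX j \<omega>)) \<in> borel_measurable P"
    unfolding Good_def by blast
  show ?thesis
    by (rule P.integrable_const_bound[where B=B]) (use B m in \<open>auto simp: norm_mult norm_exp_i_times\<close>)
qed

lemma Good_intQ:
  assumes "Good \<psi>" shows "integrable Q (\<lambda>\<omega>. \<psi> (\<lambda>j. UU j \<omega>) * iexp (\<Sum>j<n. t j * UU j \<omega>))"
proof -
  from assms obtain B where B: "\<forall>x. norm (\<psi> x) \<le> B" and m: "(\<lambda>\<omega>. \<psi> (\<lambda>j. UU j \<omega>)) \<in> borel_measurable Q"
    unfolding Good_def by blast
  show ?thesis
    by (rule Q.integrable_const_bound[where B=B]) (use B m in \<open>auto simp: norm_mult norm_exp_i_times\<close>)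
qed

lemma sum_upd_shift:
  fixes t x :: "nat \<Rightarrow> real"
  assumes "k < n"
  shows "(\<Sum>j<n. (t(k := t k + s)) j * x j) = (\<Sum>j<n. t j * x j) + s * x k"
proof -
  have "(\<Sum>j<n. (t(k := t k + s)) j * x j) = (\<Sum>j<n. t j * x j + (if j = k then s * x k else 0))"
    by (intro sum.cong) (auto simp: distrib_right)
  also have "\<dots> = (\<Sum>j<n. t j * x j) + s * x k"
    using assms by (simp add: sum.distrib distrib_right)
  finally show ?thesis .
qed

lemma Good_mult:
  assumes "q \<in> TP" "k < n"
  shows "Good \<psi> \<Longrightarrow> Good (\<lambda>x. \<psi> x * q (x k))"
  using assms(1)
proof (induct q arbitrary: \<psi> rule: TP.induct)
  case (TP_exp s)
  from TP_exp obtain B where B: "\<forall>x. norm (\<psi> x) \<le> B" unfolding Good_def by blast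
  have m1: "(\<lambda>\<omega>. \<psi> (\<lambda>j. XX j \<omega>)) \<in> borel_measurable P" "(\<lambda>\<omega>. \<psi> (\<lambda>j. UU j \<omega>)) \<in> borel_measurable Q"
    using TP_exp unfolding Good_def by auto
  show ?case unfolding Good_def
  proof (intro conjI allI)
    show "\<exists>B. \<forall>x. norm (\<psi> x * iexp (s * x k)) \<le> B"
      using B by (intro exI[of _ B]) (simp add: norm_mult norm_exp_i_times)
    show "(\<lambda>\<omega>. \<psi> (\<lambda>j. XX j \<omega>) * iexp (s * XX k \<omega>)) \<in> borel_measurable P" using m1 by measurable
    show "(\<lambda>\<omega>. \<psi> (\<lambda>j. UU j \<omega>) * iexp (s * UU k \<omega>)) \<in> borel_measurable Q" using m1 by measurable
    fix t
    have eq: "\<And>x. \<psi> x * iexp (s * x k) * iexp (\<Sum>j<n. t j * x j) = \<psi> x * iexp (\<Sum>j<n. (t(k := t k + s)) j * x j)"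
      by (subst sum_upd_shift[OF \<open>k < n\<close>]) (simp only: mult.assoc iexp_add add.commute)
    have "(\<integral>\<omega>. \<psi> (\<lambda>j. XX j \<omega>) * iexp (s * XX k \<omega>) * iexp (\<Sum>j<n. t j * XX j \<omega>) \<partial>P) =
          (\<integral>\<omega>. \<psi> (\<lambda>j. XX j \<omega>) * iexp (\<Sum>j<n. (t(k := t k + s)) j * XX j \<omega>) \<partial>P)"
      by (rule Bochner_Integration.integral_cong[OF refl]) (rule eq[of "\<lambda>j. XX j _"])
    also have "\<dots> = (\<integral>\<omega>. \<psi> (\<lambda>j. UU j \<omega>) * iexp (\<Sum>j<n. (t(k := t k + s)) j * UU j \<omega>) \<partial>Q)"
      using TP_exp unfolding Good_def by blast
    also have "\<dots> = (\<integral>\<omega>. \<psi> (\<lambda>j. UU j \<omega>) * iexp (s * UU k \<omega>) * iexp (\<Sum>j<n. t j * UU j \<omega>) \<partial>Q)"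
      by (rule Bochner_Integration.integral_cong[OF refl]) (rule eq[of "\<lambda>j. UU j _", symmetric])
    finally show "(\<integral>\<omega>. \<psi> (\<lambda>j. XX j \<omega>) * iexp (s * XX k \<omega>) * iexp (\<Sum>j<n. t j * XX j \<omega>) \<partial>P) =
         (\<integral>\<omega>. \<psi> (\<lambda>j. UU j \<omega>) * iexp (s * UU k \<omega>) * iexp (\<Sum>j<n. t j * UU j \<omega>) \<partial>Q)" .
  qed
next
  case (TP_const c)
  from TP_const obtain B where B: "\<forall>x. norm (\<psi> x) \<le> B" unfolding Good_def by blast
  show ?case unfolding Good_def
  proof (intro conjI allI)
    show "\<exists>B. \<forall>x. norm (\<psi> x * c) \<le> B"
      using B by (intro exI[of _ "B * norm c"]) (simp add: norm_mult mult_right_mono)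
    have m1: "(\<lambda>\<omega>. \<psi> (\<lambda>j. XX j \<omega>)) \<in> borel_measurable P" "(\<lambda>\<omega>. \<psi> (\<lambda>j. UU j \<omega>)) \<in> borel_measurable Q"
      using TP_const unfolding Good_def by auto
    show "(\<lambda>\<omega>. \<psi> (\<lambda>j. XX j \<omega>) * c) \<in> borel_measurable P" using m1 by measurable
    show "(\<lambda>\<omega>. \<psi> (\<lambda>j. UU j \<omega>) * c) \<in> borel_measurable Q" using m1 by measurable
    fix t
    have "(\<integral>\<omega>. \<psi> (\<lambda>j. XX j \<omega>) * c * iexp (\<Sum>j<n. t j * XX j \<omega>) \<partial>P)
        = (\<integral>\<omega>. c * (\<psi> (\<lambda>j. XX j \<omega>) * iexp (\<Sum>j<n. t j * XX j \<omega>)) \<partial>P)"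
      by (rule Bochner_Integration.integral_cong[OF refl]) (simp only: ac_simps)
    also have "\<dots> = c * (\<integral>\<omega>. \<psi> (\<lambda>j. XX j \<omega>) * iexp (\<Sum>j<n. t j * XX j \<omega>) \<partial>P)"
      by (rule integral_mult_right_zero)
    also have "\<dots> = c * (\<integral>\<omega>. \<psi> (\<lambda>j. UU j \<omega>) * iexp (\<Sum>j<n. t j * UU j \<omega>) \<partial>Q)"
      using TP_const unfolding Good_def by metis
    also have "\<dots> = (\<integral>\<omega>. c * (\<psi> (\<lambda>j. UU j \<omega>) * iexp (\<Sum>j<n. t j * UU j \<omega>)) \<partial>Q)"
      by (rule integral_mult_right_zero[symmetric])
    also have "\<dots> = (\<integral>\<omega>. \<psi> (\<lambda>j. UU j \<omega>) * c * iexp (\<Sum>j<n. t j * UU j \<omega>) \<partial>Q)"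
      by (rule Bochner_Integration.integral_cong[OF refl]) (simp only: ac_simps)
    finally show "(\<integral>\<omega>. \<psi> (\<lambda>j. XX j \<omega>) * c * iexp (\<Sum>j<n. t j * XX j \<omega>) \<partial>P) =
         (\<integral>\<omega>. \<psi> (\<lambda>j. UU j \<omega>) * c * iexp (\<Sum>j<n. t j * UU j \<omega>) \<partial>Q)" .
  qed
next
  case (TP_add f g)
  have Gf: "Good (\<lambda>x. \<psi> x * f (x k))" and Gg: "Good (\<lambda>x. \<psi> x * g (x k))" using TP_add by auto
  show ?case unfolding Good_def
  proof (intro conjI allI)
    obtain B1 B2 where "\<forall>x. norm (\<psi> x * f (x k)) \<le> B1" "\<forall>x. norm (\<psi> x * g (x k)) \<le> B2"
      using Gf Gg unfolding Good_def by blast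
    then show "\<exists>B. \<forall>x. norm (\<psi> x * (f (x k) + g (x k))) \<le> B"
      by (intro exI[of _ "B1 + B2"]) (auto simp: distrib_left intro: norm_triangle_le add_mono)
    show "(\<lambda>\<omega>. \<psi> (\<lambda>j. XX j \<omega>) * (f (XX k \<omega>) + g (XX k \<omega>))) \<in> borel_measurable P"
      using Gf Gg unfolding Good_def distrib_left by (intro borel_measurable_add) auto
    show "(\<lambda>\<omega>. \<psi> (\<lambda>j. UU j \<omega>) * (f (UU k \<omega>) + g (UU k \<omega>))) \<in> borel_measurable Q"
      using Gf Gg unfolding Good_def distrib_left by (intro borel_measurable_add) auto
    fix t
    have e: "\<And>x y. \<psi> x * (f (x k) + g (x k)) * y = \<psi> x * f (x k) * y + \<psi> x * g (x k) * y"
      by (simp add: algebra_simps)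
    show "(\<integral>\<omega>. \<psi> (\<lambda>j. XX j \<omega>) * (f (XX k \<omega>) + g (XX k \<omega>)) * iexp (\<Sum>j<n. t j * XX j \<omega>) \<partial>P) =
         (\<integral>\<omega>. \<psi> (\<lambda>j. UU j \<omega>) * (f (UU k \<omega>) + g (UU k \<omega>)) * iexp (\<Sum>j<n. t j * UU j \<omega>) \<partial>Q)"
    proof -
      have "(\<integral>\<omega>. \<psi> (\<lambda>j. XX j \<omega>) * (f (XX k \<omega>) + g (XX k \<omega>)) * iexp (\<Sum>j<n. t j * XX j \<omega>) \<partial>P)
         = (\<integral>\<omega>. \<psi> (\<lambda>j. XX j \<omega>) * f (XX k \<omega>) * iexp (\<Sum>j<n. t j * XX j \<omega>) + \<psi> (\<lambda>j. XX j \<omega>) * g (XX k \<omega>) * iexp (\<Sum>j<n. t j * XX j \<omega>) \<partial>P)"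
        by (rule Bochner_Integration.integral_cong[OF refl]) (rule e[of "\<lambda>j. XX j _"])
      also have "\<dots> = (\<integral>\<omega>. \<psi> (\<lambda>j. XX j \<omega>) * f (XX k \<omega>) * iexp (\<Sum>j<n. t j * XX j \<omega>) \<partial>P) + (\<integral>\<omega>. \<psi> (\<lambda>j. XX j \<omega>) * g (XX k \<omega>) * iexp (\<Sum>j<n. t j * XX j \<omega>) \<partial>P)"
        by (rule Bochner_Integration.integral_add[OF Good_intP[OF Gf] Good_intP[OF Gg]])
      also have "\<dots> = (\<integral>\<omega>. \<psi> (\<lambda>j. UU j \<omega>) * f (UU k \<omega>) * iexp (\<Sum>j<n. t j * UU j \<omega>) \<partial>Q) + (\<integral>\<omega>. \<psi> (\<lambda>j. UU j \<omega>) * g (UU k \<omega>) * iexp (\<Sum>j<n. t j * UU j \<omega>) \<partial>Q)"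
        using Gf Gg unfolding Good_def by metis
      also have "\<dots> = (\<integral>\<omega>. \<psi> (\<lambda>j. UU j \<omega>) * f (UU k \<omega>) * iexp (\<Sum>j<n. t j * UU j \<omega>) + \<psi> (\<lambda>j. UU j \<omega>) * g (UU k \<omega>) * iexp (\<Sum>j<n. t j * UU j \<omega>) \<partial>Q)"
        by (rule Bochner_Integration.integral_add[OF Good_intQ[OF Gf] Good_intQ[OF Gg], symmetric])
      also have "\<dots> = (\<integral>\<omega>. \<psi> (\<lambda>j. UU j \<omega>) * (f (UU k \<omega>) + g (UU k \<omega>)) * iexp (\<Sum>j<n. t j * UU j \<omega>) \<partial>Q)"
        by (rule Bochner_Integration.integral_cong[OF refl]) (rule e[of "\<lambda>j. UU j _", symmetric])
      finally show ?thesis .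
    qed
  qed
next
  case (TP_mult f g)
  have "Good (\<lambda>x. \<psi> x * f (x k))" using TP_mult by auto
  then have "Good (\<lambda>x. (\<psi> x * f (x k)) * g (x k))" using TP_mult by auto
  then show ?case by (simp add: mult.assoc)
qed

lemma Good_one: "Good (\<lambda>x. 1)"
  unfolding Good_def using charEq by auto

lemma Good_prod:
  assumes "q \<in> TP" "m \<le> n"
  shows "Good (\<lambda>x. \<Prod>j<m. q (x j))"
  using assms(2)
proof (induct m)
  case 0 then show ?case using Good_one by simp
next
  case (Suc m)
  then have "Good (\<lambda>x. (\<Prod>j<m. q (x j)) * q (x m))" using Good_mult[OF assms(1)] by auto
  then show ?case by (simp add: mult.commute)
qed

lemma TP_prod_eq:
  assumes "q \<in> TP"
  shows "(\<integral>\<omega>. (\<Prod>j<n. q (XX j \<omega>)) \<partial>P) = (\<integral>\<omega>. (\<Prod>j<n. q (UU j \<omega>)) \<partial>Q)"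
proof -
  have "\<forall>t. (\<integral>\<omega>. (\<Prod>j<n. q (XX j \<omega>)) * iexp (\<Sum>j<n. t j * XX j \<omega>) \<partial>P) = (\<integral>\<omega>. (\<Prod>j<n. q (UU j \<omega>)) * iexp (\<Sum>j<n. t j * UU j \<omega>) \<partial>Q)"
    using Good_prod[OF assms order_refl] unfolding Good_def by blast
  from spec[OF this, of "\<lambda>_. 0"] show ?thesis by simp
qed

end


lemma TP_eq: "f \<in> TP \<Longrightarrow> (\<And>x. g x = f x) \<Longrightarrow> g \<in> TP"
proof -
  assume "f \<in> TP" "\<And>x. g x = f x"
  then have "g = f" by auto
  then show ?thesis using \<open>f \<in> TP\<close> by simp
qed

lemma TP_cos: "(\<lambda>x. complex_of_real (cos (w * x))) \<in> TP"
proof (rule TP_eq)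
  show "(\<lambda>x. (iexp (w * x) + iexp ((- w) * x)) * (1/2)) \<in> TP"
    by (intro TP.intros)
  fix x
  have "complex_of_real (cos (w * x)) = cos (complex_of_real (w * x))" by (rule cos_of_real[symmetric])
  also have "\<dots> = (iexp (w * x) + iexp ((- w) * x)) * (1/2)"
    by (simp add: cos_exp_eq)
  finally show "complex_of_real (cos (w * x)) = (iexp (w * x) + iexp ((- w) * x)) * (1/2)" .
qed

lemma TP_poly_cos:
  assumes "real_polynomial_function p"
  shows "(\<lambda>x. complex_of_real (p (cos (w * x)))) \<in> TP"
  using assms
proof (induct p rule: real_polynomial_function.induct)
  case (linear f)
  then obtain c where c: "f = (\<lambda>x. x * c)" using real_bounded_linear by blast
  show ?case
    by (rule TP_eq[OF TP_mult[OF TP_cos[of w] TP_const[of "complex_of_real c"]]]) (simp add: c)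
next
  case (const c) then show ?case using TP_const[of "complex_of_real c"] by simp
next
  case (add f g) then show ?case by (intro TP_eq[OF TP_add[OF add(2) add(4)]]) simp
next
  case (mult f g) then show ?case by (intro TP_eq[OF TP_mult[OF mult(2) mult(4)]]) simp
qed

lemma poly_approx:
  fixes \<psi> :: "real \<Rightarrow> real"
  assumes "continuous_on {-1..1} \<psi>" "e > 0"
  shows "\<exists>p. real_polynomial_function p \<and> (\<forall>x\<in>{-1..1}. \<bar>\<psi> x - p x\<bar> < e)"
proof -
  obtain g where g: "polynomial_function g" "\<forall>x\<in>{-1..1}. norm (\<psi> x - g x) < e"
    using Stone_Weierstrass_polynomial_function[OF compact_Icc assms] by blast
  then show ?thesis using real_polynomial_function_eq by (metis real_norm_def)
qed

lemma prod_diff_bound: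
  fixes f g :: "'i \<Rightarrow> real"
  assumes "finite S" "K \<ge> 1" "\<And>i. i \<in> S \<Longrightarrow> \<bar>f i\<bar> \<le> K" "\<And>i. i \<in> S \<Longrightarrow> \<bar>g i\<bar> \<le> K"
  shows "\<bar>(\<Prod>i\<in>S. f i) - (\<Prod>i\<in>S. g i)\<bar> \<le> K ^ card S * (\<Sum>i\<in>S. \<bar>f i - g i\<bar>)"
  using assms
proof (induct S rule: finite_induct)
  case empty then show ?case by simp
next
  case (insert x S)
  have IH: "\<bar>(\<Prod>i\<in>S. f i) - (\<Prod>i\<in>S. g i)\<bar> \<le> K ^ card S * (\<Sum>i\<in>S. \<bar>f i - g i\<bar>)"
    using insert by auto
  have pf: "\<bar>\<Prod>i\<in>S. f i\<bar> \<le> K ^ card S"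
  proof -
    have "(\<Prod>i\<in>S. \<bar>f i\<bar>) \<le> (\<Prod>i\<in>S. K)" by (rule prod_mono) (use insert in auto)
    then show ?thesis by (simp add: abs_prod)
  qed
  have gx: "\<bar>g x\<bar> \<le> K" and fx: "\<bar>f x\<bar> \<le> K" using insert by auto
  have "(\<Prod>i\<in>insert x S. f i) - (\<Prod>i\<in>insert x S. g i)
      = (f x - g x) * (\<Prod>i\<in>S. f i) + g x * ((\<Prod>i\<in>S. f i) - (\<Prod>i\<in>S. g i))"
    using insert by (simp add: algebra_simps)
  then have "\<bar>(\<Prod>i\<in>insert x S. f i) - (\<Prod>i\<in>insert x S. g i)\<bar>
      \<le> \<bar>f x - g x\<bar> * \<bar>\<Prod>i\<in>S. f i\<bar> + \<bar>g x\<bar> * \<bar>(\<Prod>i\<in>S. f i) - (\<Prod>i\<in>S. g i)\<bar>"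
    by (metis abs_mult abs_triangle_ineq)
  also have "\<dots> \<le> \<bar>f x - g x\<bar> * K ^ card S + K * (K ^ card S * (\<Sum>i\<in>S. \<bar>f i - g i\<bar>))"
    by (intro add_mono mult_mono pf IH gx) (use insert in auto)
  also have "\<dots> \<le> K ^ card (insert x S) * (\<Sum>i\<in>insert x S. \<bar>f i - g i\<bar>)"
  proof -
    have "K ^ card S \<le> K ^ card (insert x S)" using insert \<open>K \<ge> 1\<close> by (simp add: power_increasing)
    then have "\<bar>f x - g x\<bar> * K ^ card S \<le> \<bar>f x - g x\<bar> * K ^ card (insert x S)"
      by (intro mult_left_mono) auto
    then show ?thesis using insert by (simp add: algebra_simps)
  qed
  finally show ?case .
qed


context twovec begin

lemma intP_prod:
  fixes h :: "real \<Rightarrow> real" and B :: real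
  assumes [measurable]: "h \<in> borel_measurable borel" and "\<And>x. \<bar>h x\<bar> \<le> B"
  shows "integrable P (\<lambda>\<omega>. \<Prod>j<n. h (XX j \<omega>))"
proof (rule P.integrable_const_bound[where B="B ^ n"])
  show "AE x in P. norm (\<Prod>j<n. h (XX j x)) \<le> B ^ n"
  proof (rule AE_I2)
    fix x
    have "(\<Prod>j<n. \<bar>h (XX j x)\<bar>) \<le> (\<Prod>j<n. B)" by (rule prod_mono) (use assms(2) in auto)
    then show "norm (\<Prod>j<n. h (XX j x)) \<le> B ^ n" by (simp add: abs_prod)
  qed
qed measurable

lemma intQ_prod:
  fixes h :: "real \<Rightarrow> real" and B :: real
  assumes [measurable]: "h \<in> borel_measurable borel" and "\<And>x. \<bar>h x\<bar> \<le> B"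
  shows "integrable Q (\<lambda>\<omega>. \<Prod>j<n. h (UU j \<omega>))"
proof (rule Q.integrable_const_bound[where B="B ^ n"])
  show "AE x in Q. norm (\<Prod>j<n. h (UU j x)) \<le> B ^ n"
  proof (rule AE_I2)
    fix x
    have "(\<Prod>j<n. \<bar>h (UU j x)\<bar>) \<le> (\<Prod>j<n. B)" by (rule prod_mono) (use assms(2) in auto)
    then show "norm (\<Prod>j<n. h (UU j x)) \<le> B ^ n" by (simp add: abs_prod)
  qed
qed measurable

lemma approx_core:
  fixes b ar :: "real \<Rightarrow> real" and \<epsilon> :: real
  assumes bm[measurable]: "b \<in> borel_measurable borel" and am[measurable]: "ar \<in> borel_measurable borel"
    and TPa: "(\<lambda>x. complex_of_real (ar x)) \<in> TP"
    and b0: "\<And>x. 0 \<le> b x" and b1: "\<And>x. b x \<le> 1" and close: "\<And>x. \<bar>ar x - b x\<bar> \<le> \<epsilon>" and e1: "\<epsilon> \<le> 1"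
  shows "(\<integral>\<omega>. (\<Prod>j<n. b (XX j \<omega>)) \<partial>P) \<le> (\<integral>\<omega>. (\<Prod>j<n. b (UU j \<omega>)) \<partial>Q) + 2 * (2 ^ n * (n * \<epsilon>))"
proof -
  have ab: "\<bar>ar x\<bar> \<le> 2" for x using close[of x] b0[of x] b1[of x] e1 by (simp add: abs_le_iff)
  have bb: "\<bar>b x\<bar> \<le> 2" for x using b0[of x] b1[of x] by (simp add: abs_le_iff)
  have eqa: "(\<integral>\<omega>. (\<Prod>j<n. ar (XX j \<omega>)) \<partial>P) = (\<integral>\<omega>. (\<Prod>j<n. ar (UU j \<omega>)) \<partial>Q)"
  proof -
    have "complex_of_real (\<integral>\<omega>. (\<Prod>j<n. ar (XX j \<omega>)) \<partial>P) = complex_of_real (\<integral>\<omega>. (\<Prod>j<n. ar (UU j \<omega>)) \<partial>Q)"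
      using TP_prod_eq[OF TPa] by (simp only: of_real_prod[symmetric] integral_complex_of_real)
    then show ?thesis by (simp only: of_real_eq_iff)
  qed
  have pw: "\<And>y. \<bar>(\<Prod>j<n. b (y j)) - (\<Prod>j<n. ar (y j))\<bar> \<le> 2 ^ n * (n * \<epsilon>)"
  proof -
    fix y :: "nat \<Rightarrow> real"
    have "\<bar>(\<Prod>j<n. b (y j)) - (\<Prod>j<n. ar (y j))\<bar> \<le> 2 ^ card {..<n} * (\<Sum>j<n. \<bar>b (y j) - ar (y j)\<bar>)"
      by (rule prod_diff_bound) (auto intro: ab bb)
    also have "\<dots> \<le> 2 ^ n * (\<Sum>j<n. \<epsilon>)"
      unfolding card_lessThan
      by (intro mult_left_mono sum_mono) (use close in \<open>auto simp: abs_minus_commute\<close>)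
    finally show "\<bar>(\<Prod>j<n. b (y j)) - (\<Prod>j<n. ar (y j))\<bar> \<le> 2 ^ n * (n * \<epsilon>)" by simp
  qed
  have iPb: "integrable P (\<lambda>\<omega>. \<Prod>j<n. b (XX j \<omega>))" by (rule intP_prod[OF bm bb])
  have iPa: "integrable P (\<lambda>\<omega>. \<Prod>j<n. ar (XX j \<omega>))" by (rule intP_prod[OF am ab])
  have iQb: "integrable Q (\<lambda>\<omega>. \<Prod>j<n. b (UU j \<omega>))" by (rule intQ_prod[OF bm bb])
  have iQa: "integrable Q (\<lambda>\<omega>. \<Prod>j<n. ar (UU j \<omega>))" by (rule intQ_prod[OF am ab])
  define C where "C = 2 ^ n * (real n * \<epsilon>)"
  have "(\<integral>\<omega>. (\<Prod>j<n. b (XX j \<omega>)) \<partial>P) \<le> (\<integral>\<omega>. (\<Prod>j<n. ar (XX j \<omega>)) + C \<partial>P)"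
  proof (rule Bochner_Integration.integral_mono[OF iPb Bochner_Integration.integrable_add[OF iPa P.integrable_const]])
    fix \<omega> show "(\<Prod>j<n. b (XX j \<omega>)) \<le> (\<Prod>j<n. ar (XX j \<omega>)) + C"
      using pw[of "\<lambda>j. XX j \<omega>"] unfolding C_def by linarith
  qed
  also have "\<dots> = (\<integral>\<omega>. (\<Prod>j<n. ar (XX j \<omega>)) \<partial>P) + C"
    using Bochner_Integration.integral_add[OF iPa P.integrable_const] by (simp add: P.prob_space)
  also have "\<dots> = (\<integral>\<omega>. (\<Prod>j<n. ar (UU j \<omega>)) \<partial>Q) + C" by (simp only: eqa)
  also have "(\<integral>\<omega>. (\<Prod>j<n. ar (UU j \<omega>)) \<partial>Q) \<le> (\<integral>\<omega>. (\<Prod>j<n. b (UU j \<omega>)) + C \<partial>Q)"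
  proof (rule Bochner_Integration.integral_mono[OF iQa Bochner_Integration.integrable_add[OF iQb Q.integrable_const]])
    fix \<omega> show "(\<Prod>j<n. ar (UU j \<omega>)) \<le> (\<Prod>j<n. b (UU j \<omega>)) + C"
      using pw[of "\<lambda>j. UU j \<omega>"] unfolding C_def by linarith
  qed
  also have "\<dots> = (\<integral>\<omega>. (\<Prod>j<n. b (UU j \<omega>)) \<partial>Q) + C"
    using Bochner_Integration.integral_add[OF iQb Q.integrable_const] by (simp add: Q.prob_space)
  finally show ?thesis unfolding C_def by linarith
qed



lemma tail_lim: "(\<lambda>L::nat. Q.prob {\<omega> \<in> space Q. real L < \<bar>UU j \<omega>\<bar>}) \<longlonglongrightarrow> 0"
proof -
  let ?A = "\<lambda>L::nat. {\<omega> \<in> space Q. real L < \<bar>UU j \<omega>\<bar>}"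
  have "(\<lambda>L. Q.prob (?A L)) \<longlonglongrightarrow> Q.prob (\<Inter>L. ?A L)"
  proof (rule Q.finite_Lim_measure_decseq)
    show "range ?A \<subseteq> sets Q" by auto
    show "decseq ?A" by (auto simp: decseq_def)
  qed
  moreover have "(\<Inter>L. ?A L) = {}"
  proof safe
    fix x assume "x \<in> (\<Inter>L. ?A L)"
    obtain L :: nat where "\<bar>UU j x\<bar> < real L" using reals_Archimedean2 by blast
    moreover have "real L < \<bar>UU j x\<bar>" using \<open>x \<in> (\<Inter>L. ?A L)\<close> by auto
    ultimately show "x \<in> {}" by linarith
  qed
  ultimately show ?thesis by simp
qed

lemma box_le:
  assumes z: "z \<ge> 0" and d: "\<delta> > 0"
  shows "P.prob {\<omega> \<in> space P. \<forall>j<n. \<bar>XX j \<omega>\<bar> \<le> z} \<le> Q.prob {\<omega> \<in> space Q. \<forall>j<n. \<bar>UU j \<omega>\<bar> \<le> z + \<delta>}"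
proof (rule field_le_epsilon)
  fix \<eta> :: real assume eta: "\<eta> > 0"
  have "(\<lambda>L::nat. \<Sum>j<n. Q.prob {\<omega> \<in> space Q. real L < \<bar>UU j \<omega>\<bar>}) \<longlonglongrightarrow> (\<Sum>j<n. 0)"
    by (intro tendsto_sum tail_lim)
  then have ev1: "eventually (\<lambda>L::nat. (\<Sum>j<n. Q.prob {\<omega> \<in> space Q. real L < \<bar>UU j \<omega>\<bar>}) < \<eta> / 2) sequentially"
    by (rule order_tendstoD(2)) (use eta in simp)
  have ev2: "eventually (\<lambda>L::nat. z + \<delta> < real L) sequentially"
    by (rule eventually_sequentiallyI[of "nat (ceiling (z + \<delta>)) + 1"]) linarith
  obtain L :: nat where L1: "(\<Sum>j<n. Q.prob {\<omega> \<in> space Q. real L < \<bar>UU j \<omega>\<bar>}) < \<eta> / 2"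
    and L2: "z + \<delta> < real L"
    using eventually_happens'[OF sequentially_bot eventually_conj[OF ev1 ev2]] by blast
  define Lr where "Lr = real L"
  have Lpos: "Lr > 0" using L2 z d unfolding Lr_def by linarith
  define w where "w = pi / Lr"
  have wpos: "w > 0" unfolding w_def using Lpos by simp
  define c0 where "c0 = cos (w * z)"
  define c1 where "c1 = cos (w * (z + \<delta>))"
  have wz: "w * (z + \<delta>) < pi"
  proof -
    have "(z + \<delta>) * pi < Lr * pi" using L2 unfolding Lr_def by (intro mult_strict_right_mono) auto
    then show ?thesis unfolding w_def using Lpos by (simp add: field_simps)
  qed
  have wz0: "w * z \<le> pi"
  proof -
    have "w * z \<le> w * (z + \<delta>)" using wpos d by (intro mult_left_mono) auto
    then show ?thesis using wz by linarith
  qed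
  have c01: "c1 < c0" unfolding c0_def c1_def
    by (rule cos_monotone_0_pi) (use z d wpos wz in auto)
  define \<psi> where "\<psi> c = max 0 (min 1 ((c - c1) / (c0 - c1)))" for c
  define b where "b x = \<psi> (cos (w * x))" for x
  have \<psi>cont: "continuous_on {-1..1} \<psi>" unfolding \<psi>_def by (intro continuous_intros) (use c01 in auto)
  define \<epsilon> where "\<epsilon> = min 1 (\<eta> / (4 * (2 ^ n * (real n + 1))))"
  have epos: "\<epsilon> > 0" unfolding \<epsilon>_def using eta by simp
  obtain p where p: "real_polynomial_function p" "\<forall>x\<in>{-1..1}. \<bar>\<psi> x - p x\<bar> < \<epsilon>"
    using poly_approx[OF \<psi>cont epos] by blast
  define ar where "ar x = p (cos (w * x))" for x
  have pcont: "continuous_on UNIV p" using p(1) continuous_on_polymonial_function real_polynomial_function_eq by blast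
  have pm[measurable]: "p \<in> borel_measurable borel" using pcont borel_measurable_continuous_onI by blast
  have bm[measurable]: "b \<in> borel_measurable borel" unfolding b_def \<psi>_def by measurable
  have am[measurable]: "ar \<in> borel_measurable borel" unfolding ar_def by measurable
  have TPa: "(\<lambda>x. complex_of_real (ar x)) \<in> TP" unfolding ar_def by (rule TP_poly_cos[OF p(1)])
  have b0: "0 \<le> b x" and b1: "b x \<le> 1" for x unfolding b_def \<psi>_def by auto
  have close: "\<bar>ar x - b x\<bar> \<le> \<epsilon>" for x
  proof -
    have "cos (w * x) \<in> {-1..1}" by auto
    then show ?thesis using p(2) unfolding ar_def b_def by (auto simp: abs_minus_commute less_imp_le)
  qed
  have e1: "\<epsilon> \<le> 1" unfolding \<epsilon>_def by simp
  have core: "(\<integral>\<omega>. (\<Prod>j<n. b (XX j \<omega>)) \<partial>P) \<le> (\<integral>\<omega>. (\<Prod>j<n. b (UU j \<omega>)) \<partial>Q) + 2 * (2 ^ n * (n * \<epsilon>))"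
    by (rule approx_core[OF bm am TPa b0 b1 close e1])
  have err: "2 * (2 ^ n * (n * \<epsilon>)) \<le> \<eta> / 2"
  proof -
    define D :: real where "D = 4 * (2 ^ n * (real n + 1))"
    have Dpos: "D > 0" unfolding D_def by simp
    have "\<epsilon> \<le> \<eta> / D" unfolding \<epsilon>_def D_def by simp
    then have eD: "\<epsilon> * D \<le> \<eta>" using Dpos by (simp add: pos_le_divide_eq)
    have "4 * (2 ^ n * (n * \<epsilon>)) \<le> 4 * (2 ^ n * ((real n + 1) * \<epsilon>))"
      using epos by (intro mult_left_mono mult_right_mono) auto
    also have "\<dots> = \<epsilon> * D" unfolding D_def by (simp add: algebra_simps)
    finally show ?thesis using eD by linarith
  qed
  have b_one: "b x = 1" if "\<bar>x\<bar> \<le> z" for x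
  proof -
    have "cos (w * \<bar>x\<bar>) \<ge> c0" unfolding c0_def
      by (rule cos_monotone_0_pi_le) (use that wpos wz0 d in \<open>auto intro: mult_left_mono simp: mult_le_cancel_left\<close>)
    moreover have "cos (w * x) = cos (w * \<bar>x\<bar>)" by (cases "x \<ge> 0") auto
    ultimately show ?thesis unfolding b_def \<psi>_def using c01 by (simp add: field_simps)
  qed
  have b_zero: "b x = 0" if "z + \<delta> \<le> \<bar>x\<bar>" "\<bar>x\<bar> \<le> Lr" for x
  proof -
    have "w * \<bar>x\<bar> \<le> pi" using that wpos Lpos unfolding w_def by (simp add: field_simps)
    then have "cos (w * \<bar>x\<bar>) \<le> c1" unfolding c1_def
      by (intro cos_monotone_0_pi_le) (use that wpos z d in \<open>auto intro: mult_left_mono\<close>)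
    moreover have "cos (w * x) = cos (w * \<bar>x\<bar>)" by (cases "x \<ge> 0") auto
    ultimately show ?thesis unfolding b_def \<psi>_def using c01 by (simp add: field_simps)
  qed
  define BX where "BX = {\<omega> \<in> space P. \<forall>j<n. \<bar>XX j \<omega>\<bar> \<le> z}"
  define BU where "BU = {\<omega> \<in> space Q. \<forall>j<n. \<bar>UU j \<omega>\<bar> \<le> z + \<delta>}"
  define T where "T j = {\<omega> \<in> space Q. real L < \<bar>UU j \<omega>\<bar>}" for j
  have BXs[measurable]: "BX \<in> sets P" unfolding BX_def by measurable
  have BUs[measurable]: "BU \<in> sets Q" unfolding BU_def by measurable
  have Ts[measurable]: "T j \<in> sets Q" for j unfolding T_def by measurable
  have "P.prob BX = (\<integral>\<omega>. indicator BX \<omega> \<partial>P)" using BXs by (simp add: Bochner_Integration.integral_indicator)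
  also have "\<dots> \<le> (\<integral>\<omega>. (\<Prod>j<n. b (XX j \<omega>)) \<partial>P)"
  proof (rule Bochner_Integration.integral_mono)
    show "integrable P (indicator BX :: 'a \<Rightarrow> real)" by (rule integrable_real_indicator[OF BXs]) (simp add: P.emeasure_finite less_top[symmetric])
    show "integrable P (\<lambda>\<omega>. \<Prod>j<n. b (XX j \<omega>))" by (rule intP_prod[where B=1]) (use b0 b1 in auto)
    fix \<omega> assume "\<omega> \<in> space P"
    show "indicator BX \<omega> \<le> (\<Prod>j<n. b (XX j \<omega>))"
    proof (cases "\<omega> \<in> BX")
      case True then have "\<forall>j<n. b (XX j \<omega>) = 1" unfolding BX_def using b_one by auto
      then show ?thesis using True by simp
    next
      case False then show ?thesis by (simp add: b0 prod_nonneg)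
    qed
  qed
  also note core
  also have "(\<integral>\<omega>. (\<Prod>j<n. b (UU j \<omega>)) \<partial>Q) \<le> (\<integral>\<omega>. indicator BU \<omega> + (\<Sum>j<n. indicator (T j) \<omega>) \<partial>Q)"
  proof (rule Bochner_Integration.integral_mono)
    show "integrable Q (\<lambda>\<omega>. \<Prod>j<n. b (UU j \<omega>))" by (rule intQ_prod[where B=1]) (use b0 b1 in auto)
    show "integrable Q (\<lambda>\<omega>. indicator BU \<omega> + (\<Sum>j<n. indicator (T j) \<omega>) :: real)"
      by (intro Bochner_Integration.integrable_add Bochner_Integration.integrable_sum) (auto simp: Q.emeasure_finite less_top[symmetric])
    fix \<omega> assume om: "\<omega> \<in> space Q"
    have pl1: "(\<Prod>j<n. b (UU j \<omega>)) \<le> 1" by (rule prod_le_1) (use b0 b1 in auto)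
    have sn: "(\<Sum>j<n. indicator (T j) \<omega> :: real) \<ge> 0" by (simp add: sum_nonneg)
    show "(\<Prod>j<n. b (UU j \<omega>)) \<le> indicator BU \<omega> + (\<Sum>j<n. indicator (T j) \<omega>)"
    proof (cases "\<omega> \<in> BU")
      case True then show ?thesis using pl1 sn by simp
    next
      case False
      then obtain k where k: "k < n" "z + \<delta> < \<bar>UU k \<omega>\<bar>" using om unfolding BU_def by auto
      show ?thesis
      proof (cases "\<bar>UU k \<omega>\<bar> \<le> Lr")
        case True
        then have "b (UU k \<omega>) = 0" using b_zero k by auto
        then have p0: "(\<Prod>j<n. b (UU j \<omega>)) = 0" using k by (intro prod_zero) auto
        have "indicator BU \<omega> = (0::real)" using False by simp
        then show ?thesis using p0 sn by linarith
      next
        case False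
        then have "\<omega> \<in> T k" using om unfolding T_def Lr_def by auto
        then have i1: "indicator (T k) \<omega> = (1::real)" by simp
        have "indicator (T k) \<omega> \<le> (\<Sum>j<n. indicator (T j) \<omega> :: real)"
          by (rule member_le_sum) (use k in auto)
        then have "(1::real) \<le> (\<Sum>j<n. indicator (T j) \<omega>)" using i1 by simp
        then show ?thesis using pl1 by (simp add: indicator_def)
      qed
    qed
  qed
  also have "(\<integral>\<omega>. indicator BU \<omega> + (\<Sum>j<n. indicator (T j) \<omega>) \<partial>Q) = Q.prob BU + (\<Sum>j<n. Q.prob (T j))"
    by (subst Bochner_Integration.integral_add) (auto intro!: Bochner_Integration.integrable_sum simp: Q.emeasure_finite less_top[symmetric] Bochner_Integration.integral_indicator)
  finally have "P.prob BX \<le> Q.prob BU + (\<Sum>j<n. Q.prob (T j)) + 2 * (2 ^ n * (real n * \<epsilon>))" by simp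
  moreover have "(\<Sum>j<n. Q.prob (T j)) < \<eta> / 2" using L1 unfolding T_def .
  ultimately show "P.prob BX \<le> Q.prob BU + \<eta>" using err by linarith
qed

end


lemma N01_prob: "prob_space std_normal_distribution"
  by (rule prob_space_normal_density) simp

lemma N01_id: "distributed std_normal_distribution lborel (\<lambda>x. x) std_normal_density"
  unfolding distributed_def by (auto simp: distr_id2 cong: distr_cong)

lemma N01_scale:
  assumes "\<sigma> > 0"
  shows "distr std_normal_distribution lborel (\<lambda>x. \<sigma> * x) = density lborel (normal_density 0 \<sigma>)"
proof -
  interpret N: prob_space std_normal_distribution by (rule N01_prob)
  have "distributed std_normal_distribution lborel (\<lambda>x. 0 + \<sigma> * x) (normal_density (0 + \<sigma> * 0) (\<bar>\<sigma>\<bar> * 1))"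
    by (rule N.normal_density_affine[OF N01_id]) (use assms in auto)
  then show ?thesis using assms unfolding distributed_def by simp
qed

lemma cg_law:
  assumes M: "prob_space M" and S: "centered_gaussian_rv M S"
  shows "\<exists>\<sigma>\<ge>0. distr M lborel S = distr std_normal_distribution lborel (\<lambda>x. \<sigma> * x)"
proof -
  interpret prob_space M by (rule M)
  interpret N: prob_space std_normal_distribution by (rule N01_prob)
  have Sm[measurable]: "S \<in> borel_measurable M" using S unfolding centered_gaussian_rv_def by simp
  consider "AE \<omega> in M. S \<omega> = 0" | \<sigma> where "\<sigma> > 0" "distributed M lborel S (normal_density 0 \<sigma>)"
    using S unfolding centered_gaussian_rv_def by blast
  then show ?thesis
  proof cases
    case 1
    have "distr M lborel S = distr M lborel (\<lambda>_. 0::real)"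
      by (rule distr_cong_AE) (use 1 in auto)
    also have "\<dots> = return lborel 0" by simp
    also have "\<dots> = distr std_normal_distribution lborel (\<lambda>_. 0::real)" by simp
    also have "\<dots> = distr std_normal_distribution lborel (\<lambda>x. 0 * x)" by simp
    finally show ?thesis by blast
  next
    case 2
    then have "distr M lborel S = density lborel (normal_density 0 \<sigma>)" unfolding distributed_def by simp
    then show ?thesis using N01_scale[OF 2(1)] 2(1) by (intro exI[of _ \<sigma>]) auto
  qed
qed

lemma law_integral:
  fixes g :: "real \<Rightarrow> 'b::{banach, second_countable_topology}"
  assumes L: "distr M lborel S = distr std_normal_distribution lborel (\<lambda>x. \<sigma> * x)"
    and [measurable]: "S \<in> borel_measurable M" "g \<in> borel_measurable borel"
  shows "(\<integral>\<omega>. g (S \<omega>) \<partial>M) = (\<integral>x. g (\<sigma> * x) \<partial>std_normal_distribution)"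
proof -
  have "(\<integral>\<omega>. g (S \<omega>) \<partial>M) = integral\<^sup>L (distr M lborel S) g"
    by (rule integral_distr[symmetric]) auto
  also have "\<dots> = integral\<^sup>L (distr std_normal_distribution lborel (\<lambda>x. \<sigma> * x)) g" by (simp only: L)
  also have "\<dots> = (\<integral>x. g (\<sigma> * x) \<partial>std_normal_distribution)"
    by (rule integral_distr) auto
  finally show ?thesis .
qed

lemma law_integrable:
  fixes g :: "real \<Rightarrow> 'b::{banach, second_countable_topology}"
  assumes L: "distr M lborel S = distr std_normal_distribution lborel (\<lambda>x. \<sigma> * x)"
    and [measurable]: "S \<in> borel_measurable M" "g \<in> borel_measurable borel"
  shows "integrable M (\<lambda>\<omega>. g (S \<omega>)) \<longleftrightarrow> integrable std_normal_distribution (\<lambda>x. g (\<sigma> * x))"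
proof -
  have "integrable M (\<lambda>\<omega>. g (S \<omega>)) \<longleftrightarrow> integrable (distr M lborel S) g"
    by (rule integrable_distr_eq[symmetric]) auto
  also have "\<dots> \<longleftrightarrow> integrable (distr std_normal_distribution lborel (\<lambda>x. \<sigma> * x)) g" by (simp only: L)
  also have "\<dots> \<longleftrightarrow> integrable std_normal_distribution (\<lambda>x. g (\<sigma> * x))"
    by (rule integrable_distr_eq) auto
  finally show ?thesis .
qed

lemma law_measure:
  assumes L: "distr M lborel S = distr std_normal_distribution lborel (\<lambda>x. \<sigma> * x)"
    and [measurable]: "S \<in> borel_measurable M" and A[measurable]: "A \<in> sets borel"
  shows "measure M {\<omega> \<in> space M. S \<omega> \<in> A} = measure std_normal_distribution {x. \<sigma> * x \<in> A}"
proof -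
  have "measure M {\<omega> \<in> space M. S \<omega> \<in> A} = measure (distr M lborel S) A"
    by (subst measure_distr) (auto intro: arg_cong[where f="measure M"])
  also have "\<dots> = measure (distr std_normal_distribution lborel (\<lambda>x. \<sigma> * x)) A" by (simp only: L)
  also have "\<dots> = measure std_normal_distribution {x. \<sigma> * x \<in> A}"
    by (subst measure_distr) (auto intro: arg_cong[where f="measure std_normal_distribution"])
  finally show ?thesis .
qed

lemma cg_facts:
  assumes M: "prob_space M" and S: "centered_gaussian_rv M S"
  shows "integrable M (\<lambda>\<omega>. (S \<omega>)\<^sup>2)"
    and "(\<integral>\<omega>. iexp (S \<omega>) \<partial>M) = complex_of_real (exp (- (\<integral>\<omega>. (S \<omega>)\<^sup>2 \<partial>M) / 2))"
proof -
  have Sm[measurable]: "S \<in> borel_measurable M" using S unfolding centered_gaussian_rv_def by simp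
  obtain \<sigma> where "\<sigma> \<ge> 0" and L: "distr M lborel S = distr std_normal_distribution lborel (\<lambda>x. \<sigma> * x)"
    using cg_law[OF M S] by blast
  have i2: "integrable std_normal_distribution (\<lambda>x. x ^ 2)"
    by (rule integrable_std_normal_distribution_moment)
  show "integrable M (\<lambda>\<omega>. (S \<omega>)\<^sup>2)"
    unfolding law_integrable[OF L Sm, of "\<lambda>x. x^2", simplified]
    using i2 by (simp add: power_mult_distrib)
  have m2: "(\<integral>x. x ^ 2 \<partial>std_normal_distribution) = 1"
    using std_normal_distribution_even_moments(1)[of 1] by simp
  have "(\<integral>\<omega>. (S \<omega>)\<^sup>2 \<partial>M) = (\<integral>x. (\<sigma> * x)\<^sup>2 \<partial>std_normal_distribution)"
    by (rule law_integral[OF L Sm]) auto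
  also have "\<dots> = \<sigma>\<^sup>2" using m2 by (simp add: power_mult_distrib)
  finally have v: "(\<integral>\<omega>. (S \<omega>)\<^sup>2 \<partial>M) = \<sigma>\<^sup>2" .
  have "(\<integral>\<omega>. iexp (S \<omega>) \<partial>M) = (\<integral>x. iexp (\<sigma> * x) \<partial>std_normal_distribution)"
    by (rule law_integral[OF L Sm]) auto
  also have "\<dots> = char std_normal_distribution \<sigma>" unfolding char_def by simp
  also have "\<dots> = complex_of_real (exp (- (\<sigma>\<^sup>2) / 2))" by (simp add: char_std_normal_distribution)
  finally show "(\<integral>\<omega>. iexp (S \<omega>) \<partial>M) = complex_of_real (exp (- (\<integral>\<omega>. (S \<omega>)\<^sup>2 \<partial>M) / 2))"
    using v by simp
qed


abbreviation "N01 \<equiv> std_normal_distribution"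

lemma snd_even: "std_normal_density (- x) = std_normal_density x"
  by (simp add: normal_density_def)

lemma snd_mono: "\<bar>x\<bar> \<le> \<bar>y\<bar> \<Longrightarrow> std_normal_density y \<le> std_normal_density x"
proof -
  assume "\<bar>x\<bar> \<le> \<bar>y\<bar>"
  then have "x\<^sup>2 \<le> y\<^sup>2" by (metis abs_le_square_iff)
  then show ?thesis by (simp add: normal_density_def divide_right_mono)
qed

lemma emeasure_N01: "A \<in> sets borel \<Longrightarrow> emeasure N01 A = (\<integral>\<^sup>+x. ennreal (std_normal_density x) * indicator A x \<partial>lborel)"
  by (rule emeasure_density) auto

lemma N01_shift_halfopen:
  assumes a: "a \<ge> 0" and l: "l \<ge> 0"
  shows "emeasure N01 {a-l..<a+l} \<le> emeasure N01 {-l..<l}"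
proof -
  let ?f = "\<lambda>x. ennreal (std_normal_density x)"
  let ?E = "\<lambda>A. (\<integral>\<^sup>+x. ?f x * indicator A x \<partial>lborel)"
  have ind: "indicator {a-l..<a+l} x + indicator {-l..<a-l} x = (indicator {-l..<l} x + indicator {l..<a+l} x :: ennreal)" for x
    using a l by (auto simp: indicator_def)
  have "?E {a-l..<a+l} + ?E {-l..<a-l} = (\<integral>\<^sup>+x. ?f x * indicator {a-l..<a+l} x + ?f x * indicator {-l..<a-l} x \<partial>lborel)"
    by (rule nn_integral_add[symmetric]) auto
  also have "\<dots> = (\<integral>\<^sup>+x. ?f x * indicator {-l..<l} x + ?f x * indicator {l..<a+l} x \<partial>lborel)"
    by (rule nn_integral_cong) (simp only: distrib_left[symmetric] ind)
  also have "\<dots> = ?E {-l..<l} + ?E {l..<a+l}"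
    by (rule nn_integral_add) auto
  finally have eq: "?E {a-l..<a+l} + ?E {-l..<a-l} = ?E {-l..<l} + ?E {l..<a+l}" .
  have aff: "?E {l..<a+l} = ennreal \<bar>1\<bar> * (\<integral>\<^sup>+y. ?f (2*l + 1 * y) * indicator {l..<a+l} (2*l + 1 * y) \<partial>lborel)"
    by (rule nn_integral_real_affine) auto
  have ii: "indicator {l..<a+l} (2*l + y) = (indicator {-l..<a-l} y :: ennreal)" for y
    unfolding indicator_def by auto
  have "?E {l..<a+l} = (\<integral>\<^sup>+y. ?f (2*l + y) * indicator {-l..<a-l} y \<partial>lborel)"
    unfolding aff by (simp only: ii abs_one ennreal_1 mult_1 mult_1_left)
  also have "\<dots> \<le> ?E {-l..<a-l}"
  proof (rule nn_integral_mono)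
    fix y
    show "?f (2*l + y) * indicator {-l..<a-l} y \<le> ?f y * indicator {-l..<a-l} y"
    proof (cases "y \<in> {-l..<a-l}")
      case True
      then have "\<bar>y\<bar> \<le> \<bar>2*l + y\<bar>" using l by auto
      then have "std_normal_density (2*l + y) \<le> std_normal_density y" by (rule snd_mono)
      then show ?thesis using True by (simp add: ennreal_leI)
    qed simp
  qed
  finally have le: "?E {l..<a+l} \<le> ?E {-l..<a-l}" .
  have fin: "?E {-l..<a-l} \<noteq> \<infinity>"
  proof -
    interpret N: prob_space N01 by (rule prob_space_normal_density) simp
    have "?E {-l..<a-l} = emeasure N01 {-l..<a-l}" by (rule emeasure_N01[symmetric]) auto
    then show ?thesis by (simp add: N.emeasure_finite)
  qed
  have "?E {a-l..<a+l} + ?E {-l..<a-l} \<le> ?E {-l..<l} + ?E {-l..<a-l}"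
    unfolding eq by (rule add_left_mono[OF le])
  then have "?E {-l..<a-l} + ?E {a-l..<a+l} \<le> ?E {-l..<a-l} + ?E {-l..<l}" by (simp only: add.commute)
  then have "?E {a-l..<a+l} \<le> ?E {-l..<l}" using fin by (simp only: ennreal_add_left_cancel_le) blast
  moreover have "{a-l..<a+l} \<in> sets borel" "{-l..<l} \<in> sets borel" by auto
  ultimately show ?thesis by (simp only: emeasure_N01)
qed


lemma N01_singleton: "emeasure N01 {p} = 0"
proof -
  have "emeasure N01 {p} = (\<integral>\<^sup>+x. ennreal (std_normal_density x) * indicator {p} x \<partial>lborel)"
    by (rule emeasure_N01) auto
  also have "\<dots> = (\<integral>\<^sup>+(x::real). 0 \<partial>lborel)"
    using AE_lborel_singleton[of p] by (intro nn_integral_cong_AE) (auto elim!: eventually_mono)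
  finally show ?thesis by simp
qed

lemma N01_shift_closed_pos:
  assumes a: "a \<ge> 0" and l: "l \<ge> 0"
  shows "emeasure N01 {a-l..a+l} \<le> emeasure N01 {-l..l}"
proof -
  have s: "{p} \<in> null_sets N01" for p using N01_singleton[of p] by (auto simp: null_sets_def)
  have "emeasure N01 {a-l..a+l} = emeasure N01 ({a-l..<a+l} \<union> {a+l})"
    using a l by (intro arg_cong[where f="emeasure N01"]) auto
  also have "\<dots> = emeasure N01 {a-l..<a+l}" by (rule emeasure_Un_null_set[OF _ s]) auto
  also have "\<dots> \<le> emeasure N01 {-l..<l}" by (rule N01_shift_halfopen[OF a l])
  also have "\<dots> = emeasure N01 ({-l..<l} \<union> {l})" by (rule emeasure_Un_null_set[OF _ s, symmetric]) auto
  also have "{-l..<l} \<union> {l} = {-l..l}" using l by auto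
  finally show ?thesis .
qed

lemma N01_reflect:
  shows "emeasure N01 {a-l..a+l} = emeasure N01 {-a-l..-a+l}"
proof -
  let ?f = "\<lambda>x. ennreal (std_normal_density x)"
  let ?E = "\<lambda>A. (\<integral>\<^sup>+x. ?f x * indicator A x \<partial>lborel)"
  have aff: "?E {a-l..a+l} = ennreal \<bar>-1\<bar> * (\<integral>\<^sup>+y. ?f (0 + (-1) * y) * indicator {a-l..a+l} (0 + (-1) * y) \<partial>lborel)"
    by (rule nn_integral_real_affine) auto
  have ii: "indicator {a-l..a+l} (0 + (-1) * y) = (indicator {-a-l..-a+l} y :: ennreal)" for y
    unfolding indicator_def by auto
  have ff: "?f (0 + (-1) * y) = ?f y" for y using snd_even[of y] by simp
  have "?E {a-l..a+l} = ?E {-a-l..-a+l}"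
    unfolding aff by (simp only: ii ff abs_minus_cancel abs_one ennreal_1 mult_1 mult_1_left)
  moreover have "{a-l..a+l} \<in> sets borel" "{-a-l..-a+l} \<in> sets borel" by auto
  ultimately show ?thesis by (simp only: emeasure_N01)
qed


lemma N01_shift_closed:
  assumes l: "l \<ge> 0"
  shows "emeasure N01 {a-l..a+l} \<le> emeasure N01 {-l..l}"
proof (cases "a \<ge> 0")
  case True then show ?thesis using N01_shift_closed_pos[OF True l] by simp
next
  case False
  then have "emeasure N01 {-a-l..-a+l} \<le> emeasure N01 {-l..l}" using N01_shift_closed_pos[of "-a" l] l by simp
  then show ?thesis using N01_reflect[of a l] by simp
qed

lemma N01_aff:
  assumes z: "z \<ge> 0"
  shows "measure N01 {x. \<bar>c * x + w\<bar> \<le> z} \<le> measure N01 {x. \<bar>c * x\<bar> \<le> z}"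
proof -
  interpret N: prob_space N01 by (rule prob_space_normal_density) simp
  show ?thesis
  proof (cases "c = 0")
    case True
    then have "{x. \<bar>c * x\<bar> \<le> z} = space N01" using z by auto
    then have "measure N01 {x. \<bar>c * x\<bar> \<le> z} = 1" using N.prob_space by (simp only:)
    then show ?thesis using N.prob_le_1 by (simp only:)
  next
    case False
    define l where "l = z / \<bar>c\<bar>"
    define m where "m = - w / c"
    have cpos: "\<bar>c\<bar> > 0" using False by simp
    have l0: "l \<ge> 0" unfolding l_def using z by simp
    have e1: "{x. \<bar>c * x + w\<bar> \<le> z} = {m-l..m+l}"
    proof -
      have eqv: "\<bar>c * x + w\<bar> \<le> z \<longleftrightarrow> \<bar>x - m\<bar> \<le> l" for x
      proof -
        have "c * x + w = c * (x - m)" unfolding m_def using False by (simp add: field_simps)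
        then have h: "\<bar>c * x + w\<bar> = \<bar>x - m\<bar> * \<bar>c\<bar>" by (simp add: abs_mult mult.commute)
        show ?thesis unfolding h l_def by (rule pos_le_divide_eq[OF cpos, symmetric])
      qed
      show ?thesis
      proof (rule set_eqI)
        fix x show "x \<in> {x. \<bar>c * x + w\<bar> \<le> z} \<longleftrightarrow> x \<in> {m-l..m+l}" using eqv[of x] by (simp add: abs_le_iff) linarith
      qed
    qed
    have e2: "{x. \<bar>c * x\<bar> \<le> z} = {-l..l}"
    proof -
      have eqv: "\<bar>c * x\<bar> \<le> z \<longleftrightarrow> \<bar>x\<bar> \<le> l" for x
      proof -
        have h: "\<bar>c * x\<bar> = \<bar>x\<bar> * \<bar>c\<bar>" by (simp add: abs_mult mult.commute)
        show ?thesis unfolding h l_def by (rule pos_le_divide_eq[OF cpos, symmetric])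
      qed
      show ?thesis
      proof (rule set_eqI)
        fix x show "x \<in> {x. \<bar>c * x\<bar> \<le> z} \<longleftrightarrow> x \<in> {-l..l}" using eqv[of x] by (simp add: abs_le_iff) linarith
      qed
    qed
    have "emeasure N01 {x. \<bar>c * x + w\<bar> \<le> z} \<le> emeasure N01 {x. \<bar>c * x\<bar> \<le> z}"
      unfolding e1 e2 by (rule N01_shift_closed[OF l0])
    then show ?thesis unfolding measure_def by (rule enn2real_mono) (simp add: N.emeasure_finite less_top[symmetric])
  qed
qed


locale gvec = prob_space M for M :: "'a measure" +
  fixes n :: nat and X :: "nat \<Rightarrow> 'a \<Rightarrow> real"
  assumes gv: "centered_gaussian_vector M n X"
begin

definition Cv :: "nat \<Rightarrow> nat \<Rightarrow> real" where "Cv i j = (\<integral>\<omega>. X i \<omega> * X j \<omega> \<partial>M)"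

lemma Xm[measurable]: "j < n \<Longrightarrow> X j \<in> borel_measurable M"
  using gv unfolding centered_gaussian_vector_def by auto

lemma lin_cg: "centered_gaussian_rv M (\<lambda>\<omega>. \<Sum>i<n. c i * X i \<omega>)"
  using gv unfolding centered_gaussian_vector_def by auto

lemma comp_cg: assumes "j < n" shows "centered_gaussian_rv M (X j)"
proof -
  have "(\<lambda>\<omega>. \<Sum>i<n. (if i = j then 1 else 0) * X i \<omega>) = X j"
  proof
    fix \<omega>
    have "(\<Sum>i<n. (if i = j then 1 else 0) * X i \<omega>) = (\<Sum>i<n. if i = j then X i \<omega> else 0)"
      by (intro sum.cong) auto
    also have "\<dots> = X j \<omega>" using assms by simp
    finally show "(\<Sum>i<n. (if i = j then 1 else 0) * X i \<omega>) = X j \<omega>" .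
  qed
  then show ?thesis using lin_cg[of "\<lambda>i. if i = j then 1 else 0"] by simp
qed

lemma sq_int: "j < n \<Longrightarrow> integrable M (\<lambda>\<omega>. (X j \<omega>)\<^sup>2)"
  using cg_facts(1)[OF prob_space_axioms comp_cg] by blast

lemma abs_mult_le_sq: "\<bar>x * y\<bar> \<le> x\<^sup>2 + y\<^sup>2" for x y :: real
proof -
  have "0 \<le> (\<bar>x\<bar> - \<bar>y\<bar>)\<^sup>2" by simp
  then have "2 * (\<bar>x\<bar> * \<bar>y\<bar>) \<le> x\<^sup>2 + y\<^sup>2" by (simp add: power2_eq_square algebra_simps)
  moreover have "\<bar>x\<bar> * \<bar>y\<bar> \<ge> 0" by simp
  ultimately have "\<bar>x\<bar> * \<bar>y\<bar> \<le> x\<^sup>2 + y\<^sup>2" by linarith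
  then show ?thesis by (simp add: abs_mult)
qed

lemma prod_int: assumes "i < n" "j < n" shows "integrable M (\<lambda>\<omega>. X i \<omega> * X j \<omega>)"
proof (rule Bochner_Integration.integrable_bound)
  show "integrable M (\<lambda>\<omega>. (X i \<omega>)\<^sup>2 + (X j \<omega>)\<^sup>2)"
    using sq_int assms by (intro Bochner_Integration.integrable_add) auto
  show "(\<lambda>\<omega>. X i \<omega> * X j \<omega>) \<in> borel_measurable M" using assms by measurable
  show "AE \<omega> in M. norm (X i \<omega> * X j \<omega>) \<le> norm ((X i \<omega>)\<^sup>2 + (X j \<omega>)\<^sup>2)"
    by (rule AE_I2) (simp add: abs_mult_le_sq)
qed

lemma char_X:
  "(\<integral>\<omega>. iexp (\<Sum>j<n. t j * X j \<omega>) \<partial>M) = complex_of_real (exp (- (\<Sum>i<n. \<Sum>j<n. t i * t j * Cv i j) / 2))"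
proof -
  let ?S = "\<lambda>\<omega>. \<Sum>j<n. t j * X j \<omega>"
  have sq: "(?S \<omega>)\<^sup>2 = (\<Sum>i<n. \<Sum>j<n. t i * t j * (X i \<omega> * X j \<omega>))" for \<omega>
    by (simp add: power2_eq_square sum_product algebra_simps)
  have "(\<integral>\<omega>. (?S \<omega>)\<^sup>2 \<partial>M) = (\<integral>\<omega>. (\<Sum>i<n. \<Sum>j<n. t i * t j * (X i \<omega> * X j \<omega>)) \<partial>M)"
    by (simp only: sq)
  also have "\<dots> = (\<Sum>i<n. (\<integral>\<omega>. (\<Sum>j<n. t i * t j * (X i \<omega> * X j \<omega>)) \<partial>M))"
    by (rule Bochner_Integration.integral_sum) (auto intro!: Bochner_Integration.integrable_sum Bochner_Integration.integrable_mult_right prod_int)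
  also have "\<dots> = (\<Sum>i<n. \<Sum>j<n. (\<integral>\<omega>. t i * t j * (X i \<omega> * X j \<omega>) \<partial>M))"
    by (intro sum.cong refl Bochner_Integration.integral_sum) (auto intro!: Bochner_Integration.integrable_mult_right prod_int)
  also have "\<dots> = (\<Sum>i<n. \<Sum>j<n. t i * t j * Cv i j)"
    unfolding Cv_def by simp
  finally have v: "(\<integral>\<omega>. (?S \<omega>)\<^sup>2 \<partial>M) = (\<Sum>i<n. \<Sum>j<n. t i * t j * Cv i j)" .
  show ?thesis using cg_facts(2)[OF prob_space_axioms lin_cg[of t]] v by simp
qed

end


definition remf :: "nat \<Rightarrow> (nat \<Rightarrow> nat \<Rightarrow> real) \<Rightarrow> real \<Rightarrow> nat \<Rightarrow> real" where
  "remf n C r i = r * C i i - (\<Sum>j\<in>{..<n}-{i}. \<bar>C i j\<bar>)"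

definition coef :: "nat \<Rightarrow> (nat \<Rightarrow> nat \<Rightarrow> real) \<Rightarrow> real \<Rightarrow> nat \<times> nat \<Rightarrow> nat \<Rightarrow> real" where
  "coef n C r k m = (case k of (i, j) \<Rightarrow> if i = j then (if m = i then sqrt (remf n C r i) else 0)
      else sqrt (\<bar>C i j\<bar> / 2) * (if m = i then 1 else if m = j then sgn (C i j) else 0))"

lemma beta_eq:
  assumes "i < n" "j < n"
  shows "(\<Sum>m<n. t m * coef n C r (i, j) m) =
    (if i = j then t i * sqrt (remf n C r i) else sqrt (\<bar>C i j\<bar> / 2) * (t i + sgn (C i j) * t j))"
proof (cases "i = j")
  case True
  have "(\<Sum>m<n. t m * coef n C r (i, j) m) = (\<Sum>m<n. if m = i then t i * sqrt (remf n C r i) else 0)"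
    using True by (intro sum.cong) (auto simp: coef_def)
  also have "\<dots> = t i * sqrt (remf n C r i)" using assms by simp
  finally show ?thesis using True by simp
next
  case False
  have "(\<Sum>m<n. t m * coef n C r (i, j) m) =
      (\<Sum>m<n. sqrt (\<bar>C i j\<bar> / 2) * ((if m = i then t i else 0) + (if m = j then sgn (C i j) * t j else 0)))"
    using False by (intro sum.cong) (auto simp: coef_def)
  also have "\<dots> = sqrt (\<bar>C i j\<bar> / 2) * ((\<Sum>m<n. if m = i then t i else 0) + (\<Sum>m<n. if m = j then sgn (C i j) * t j else 0))"
    by (simp add: sum_distrib_left[symmetric] sum.distrib)
  also have "\<dots> = sqrt (\<bar>C i j\<bar> / 2) * (t i + sgn (C i j) * t j)" using assms by simp
  finally show ?thesis using False by simp
qed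

lemma beta_sq:
  assumes "i < n" "j < n" "remf n C r i \<ge> 0"
  shows "(\<Sum>m<n. t m * coef n C r (i, j) m)\<^sup>2 =
    (if i = j then (t i)\<^sup>2 * remf n C r i else \<bar>C i j\<bar> / 2 * (t i)\<^sup>2 + \<bar>C i j\<bar> / 2 * (t j)\<^sup>2 + C i j * t i * t j)"
proof (cases "i = j")
  case True then show ?thesis using assms by (simp add: beta_eq power_mult_distrib)
next
  case False
  let ?c = "C i j"
  have s2: "(sgn ?c)\<^sup>2 * \<bar>?c\<bar> = \<bar>?c\<bar>" by (cases "?c = 0") (auto simp: sgn_if)
  have s1: "sgn ?c * \<bar>?c\<bar> = ?c" by (simp add: sgn_mult_abs)
  have "(\<Sum>m<n. t m * coef n C r (i, j) m)\<^sup>2 = (sqrt (\<bar>?c\<bar> / 2))\<^sup>2 * (t i + sgn ?c * t j)\<^sup>2"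
    using assms False by (simp add: beta_eq power_mult_distrib)
  also have "\<dots> = \<bar>?c\<bar> / 2 * ((t i)\<^sup>2 + 2 * (sgn ?c * t i * t j) + (sgn ?c)\<^sup>2 * (t j)\<^sup>2)"
    by (simp add: power2_eq_square algebra_simps)
  also have "\<dots> = \<bar>?c\<bar> / 2 * (t i)\<^sup>2 + (sgn ?c * \<bar>?c\<bar>) * t i * t j + ((sgn ?c)\<^sup>2 * \<bar>?c\<bar>) / 2 * (t j)\<^sup>2"
    by (simp add: algebra_simps)
  also have "\<dots> = \<bar>?c\<bar> / 2 * (t i)\<^sup>2 + \<bar>?c\<bar> / 2 * (t j)\<^sup>2 + ?c * t i * t j"
    unfolding s1 s2 by simp
  finally show ?thesis using False by simp
qed

lemma sum_offdiag:
  fixes n :: nat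
  assumes "i < n"
  shows "(\<Sum>j<n. if i = j then 0 else f j) = (\<Sum>j\<in>{..<n}-{i}. (f j :: real))"
proof -
  have "(\<Sum>j<n. if i = j then 0 else f j) = (if i = i then 0 else f i) + (\<Sum>j\<in>{..<n}-{i}. if i = j then 0 else f j)"
    by (rule sum.remove) (auto simp: assms)
  also have "\<dots> = (\<Sum>j\<in>{..<n}-{i}. f j)" by simp
  finally show ?thesis .
qed

lemma quad_identity:
  fixes C :: "nat \<Rightarrow> nat \<Rightarrow> real" and t :: "nat \<Rightarrow> real"
  assumes sym: "\<And>i j. C i j = C j i"
    and rem0: "\<And>i. i < n \<Longrightarrow> remf n C r i \<ge> 0"
    and r1: "r \<le> 1" and v0: "\<And>i. i < n \<Longrightarrow> C i i \<ge> 0"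
  shows "(\<Sum>i<n. \<Sum>j<n. (\<Sum>m<n. t m * coef n C r (i, j) m)\<^sup>2) + (\<Sum>m<n. (t m * sqrt ((1 - r) * C m m))\<^sup>2)
       = (\<Sum>i<n. \<Sum>j<n. t i * t j * C i j)"
proof -
  define T0 where "T0 = (\<Sum>i<n. \<Sum>j<n. if i = j then (t i)\<^sup>2 * remf n C r i else 0)"
  define T1 where "T1 = (\<Sum>i<n. \<Sum>j<n. if i = j then 0 else \<bar>C i j\<bar> / 2 * (t i)\<^sup>2)"
  define T2 where "T2 = (\<Sum>i<n. \<Sum>j<n. if i = j then 0 else \<bar>C i j\<bar> / 2 * (t j)\<^sup>2)"
  define T3 where "T3 = (\<Sum>i<n. \<Sum>j<n. if i = j then 0 else C i j * t i * t j)"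
  have "(\<Sum>i<n. \<Sum>j<n. (\<Sum>m<n. t m * coef n C r (i, j) m)\<^sup>2) =
     (\<Sum>i<n. \<Sum>j<n. (if i = j then (t i)\<^sup>2 * remf n C r i else 0) + (if i = j then 0 else \<bar>C i j\<bar> / 2 * (t i)\<^sup>2)
        + (if i = j then 0 else \<bar>C i j\<bar> / 2 * (t j)\<^sup>2) + (if i = j then 0 else C i j * t i * t j))"
    by (intro sum.cong refl) (simp add: beta_sq rem0)
  also have "\<dots> = T0 + T1 + T2 + T3" unfolding T0_def T1_def T2_def T3_def by (simp add: sum.distrib)
  finally have L: "(\<Sum>i<n. \<Sum>j<n. (\<Sum>m<n. t m * coef n C r (i, j) m)\<^sup>2) = T0 + T1 + T2 + T3" .
  have "T2 = (\<Sum>j<n. \<Sum>i<n. if i = j then 0 else \<bar>C i j\<bar> / 2 * (t j)\<^sup>2)" unfolding T2_def by (rule sum.swap)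
  also have "\<dots> = T1" unfolding T1_def by (intro sum.cong refl) (auto simp: sym)
  finally have T21: "T2 = T1" .
  have "T0 + T1 + T2 = (\<Sum>i<n. (t i)\<^sup>2 * (remf n C r i + (\<Sum>j<n. if i = j then 0 else \<bar>C i j\<bar>)))"
    unfolding T21 T0_def T1_def
    by (simp add: sum.distrib[symmetric] sum_distrib_left algebra_simps if_distrib cong: if_cong)
  also have "\<dots> = (\<Sum>i<n. (t i)\<^sup>2 * (r * C i i))"
    by (intro sum.cong refl) (simp add: sum_offdiag remf_def)
  finally have T012: "T0 + T1 + T2 = (\<Sum>i<n. (t i)\<^sup>2 * (r * C i i))" .
  have "(\<Sum>m<n. (t m * sqrt ((1 - r) * C m m))\<^sup>2) = (\<Sum>m<n. (t m)\<^sup>2 * ((1 - r) * C m m))"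
    using r1 v0 by (intro sum.cong refl) (simp add: power_mult_distrib)
  moreover have "(\<Sum>i<n. \<Sum>j<n. t i * t j * C i j) = (\<Sum>i<n. (t i)\<^sup>2 * C i i) + T3"
  proof -
    have "(\<Sum>i<n. \<Sum>j<n. t i * t j * C i j) = (\<Sum>i<n. \<Sum>j<n. (if i = j then (t i)\<^sup>2 * C i i else 0) + (if i = j then 0 else C i j * t i * t j))"
      by (intro sum.cong refl) (auto simp: power2_eq_square)
    also have "\<dots> = (\<Sum>i<n. (t i)\<^sup>2 * C i i) + T3" unfolding T3_def by (simp add: sum.distrib)
    finally show ?thesis .
  qed
  moreover have "(\<Sum>i<n. (t i)\<^sup>2 * (r * C i i)) + (\<Sum>m<n. (t m)\<^sup>2 * ((1 - r) * C m m)) = (\<Sum>i<n. (t i)\<^sup>2 * C i i)"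
    by (simp add: sum.distrib[symmetric] algebra_simps)
  ultimately show ?thesis using L T012 by linarith
qed



lemma PiN01_fpps: "finite I \<Longrightarrow> finite_product_prob_space (\<lambda>_. N01) I"
proof -
  assume fI: "finite I"
  have pps: "product_prob_space (\<lambda>_. N01)" by (rule product_prob_spaceI) (rule N01_prob)
  then interpret product_prob_space "\<lambda>_. N01" I by (simp add: product_prob_space_def)
  show ?thesis by unfold_locales (rule fI)
qed

lemma PiN01_prob: "finite I \<Longrightarrow> prob_space (PiM I (\<lambda>_. N01))"
proof -
  assume "finite I"
  then interpret finite_product_prob_space "\<lambda>_. N01" I by (rule PiN01_fpps)
  show ?thesis by (rule prob_space_axioms)
qed

lemma PiN01_char:
  assumes fI: "finite I"
  shows "(\<integral>g. iexp (\<Sum>i\<in>I. a i * g i) \<partial>PiM I (\<lambda>_. N01)) = complex_of_real (exp (- (\<Sum>i\<in>I. (a i)\<^sup>2) / 2))"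
proof -
  interpret finite_product_prob_space "\<lambda>_. N01" I by (rule PiN01_fpps[OF fI])
  interpret N: prob_space N01 by (rule N01_prob)
  have e: "iexp (\<Sum>i\<in>I. a i * g i) = (\<Prod>i\<in>I. iexp (a i * g i))" for g
    using fI by (simp add: exp_sum sum_distrib_left)
  have "(\<integral>g. iexp (\<Sum>i\<in>I. a i * g i) \<partial>PiM I (\<lambda>_. N01)) = (\<integral>g. (\<Prod>i\<in>I. iexp (a i * g i)) \<partial>PiM I (\<lambda>_. N01))"
    by (simp only: e)
  also have "\<dots> = (\<Prod>i\<in>I. (\<integral>x. iexp (a i * x) \<partial>N01))"
  proof (rule product_integral_prod[OF fI, where f="\<lambda>i x. iexp (a i * x)"])
    fix i show "integrable N01 (\<lambda>x. iexp (a i * x))"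
      by (rule prob_space.integrable_iexp[OF N01_prob]) auto
  qed
  also have "\<dots> = (\<Prod>i\<in>I. complex_of_real (exp (- (a i)\<^sup>2 / 2)))"
  proof (intro prod.cong refl)
    fix i
    have "char N01 (a i) = complex_of_real (exp (- (a i)\<^sup>2 / 2))" by (simp only: char_std_normal_distribution)
    then show "(\<integral>x. iexp (a i * x) \<partial>N01) = complex_of_real (exp (- (a i)\<^sup>2 / 2))" unfolding char_def .
  qed
  also have "\<dots> = complex_of_real (\<Prod>i\<in>I. exp (- (a i)\<^sup>2 / 2))" by (rule of_real_prod[symmetric])
  also have "(\<Prod>i\<in>I. exp (- (a i)\<^sup>2 / 2)) = exp (\<Sum>i\<in>I. - (a i)\<^sup>2 / 2)" by (rule exp_sum[OF fI, symmetric])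
  also have "(\<Sum>i\<in>I. - (a i)\<^sup>2 / 2) = - (\<Sum>i\<in>I. (a i)\<^sup>2) / 2" by (simp add: sum_negf sum_divide_distrib)
  finally show ?thesis .
qed

lemma pair_mult_integral:
  fixes f :: "'a \<Rightarrow> complex" and g :: "'b \<Rightarrow> complex"
  assumes A: "prob_space A" and B: "prob_space B"
    and fm[measurable]: "f \<in> borel_measurable A" and gm[measurable]: "g \<in> borel_measurable B"
    and fb: "\<And>x. norm (f x) \<le> 1" and gb: "\<And>y. norm (g y) \<le> 1"
  shows "(\<integral>z. f (fst z) * g (snd z) \<partial>(A \<Otimes>\<^sub>M B)) = (\<integral>x. f x \<partial>A) * (\<integral>y. g y \<partial>B)"
proof -
  interpret A: prob_space A by (rule A)
  interpret B: prob_space B by (rule B)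
  interpret AB: pair_prob_space A B by unfold_locales
  have int: "integrable (A \<Otimes>\<^sub>M B) (\<lambda>z. f (fst z) * g (snd z))"
  proof (rule AB.P.integrable_const_bound[where B=1])
    show "AE x in A \<Otimes>\<^sub>M B. norm (f (fst x) * g (snd x)) \<le> 1"
    proof (rule AE_I2)
      fix x show "norm (f (fst x) * g (snd x)) \<le> 1"
        unfolding norm_mult by (rule mult_le_one[OF fb norm_ge_zero gb])
    qed
  qed measurable
  have "(\<integral>z. f (fst z) * g (snd z) \<partial>(A \<Otimes>\<^sub>M B)) = (\<integral>x. (\<integral>y. f (fst (x, y)) * g (snd (x, y)) \<partial>B) \<partial>A)"
    by (rule AB.integral_fst'[OF int, symmetric])
  also have "\<dots> = (\<integral>x. f x * (\<integral>y. g y \<partial>B) \<partial>A)" by simp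
  also have "\<dots> = (\<integral>x. f x \<partial>A) * (\<integral>y. g y \<partial>B)" by simp
  finally show ?thesis .
qed


locale gvec_r = gvec +
  fixes r :: real
  assumes r1: "r < 1"
    and hypC: "\<And>i. i < n \<Longrightarrow> (\<Sum>j\<in>{..<n}-{i}. \<bar>Cv i j\<bar>) \<le> r * Cv i i"
begin

definition "DD = {..<n} \<times> {..<n}"
definition "Q1 = PiM {..<n} (\<lambda>_. N01)"
definition "Q2 = PiM DD (\<lambda>_. N01)"
definition "QQ = Q2 \<Otimes>\<^sub>M Q1"
definition "sc m = sqrt ((1 - r) * Cv m m)"
definition "wsum m h = (\<Sum>k\<in>DD. coef n Cv r k m * h k)"
definition "U m = (\<lambda>z. if m < n then sc m * snd z m + wsum m (fst z) else 0)"

lemma finDD: "finite DD" unfolding DD_def by simp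

lemma Cv_sym: "Cv i j = Cv j i" unfolding Cv_def by (simp add: mult.commute)

lemma Cv_nonneg: "Cv i i \<ge> 0" unfolding Cv_def by (rule integral_nonneg_AE) simp

lemma rem0: "i < n \<Longrightarrow> remf n Cv r i \<ge> 0"
  using hypC[of i] unfolding remf_def by simp

lemma Q1_prob: "prob_space Q1" unfolding Q1_def by (rule PiN01_prob) simp
lemma Q2_prob: "prob_space Q2" unfolding Q2_def by (rule PiN01_prob) (rule finDD)

lemma QQ_pps: "pair_prob_space Q2 Q1"
proof -
  interpret A: prob_space Q2 by (rule Q2_prob)
  interpret B: prob_space Q1 by (rule Q1_prob)
  show ?thesis by unfold_locales
qed

lemma QQ_prob: "prob_space QQ"
proof -
  interpret pair_prob_space Q2 Q1 by (rule QQ_pps)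
  show ?thesis unfolding QQ_def by (rule P.prob_space_axioms)
qed

lemma U_meas[measurable]: "U m \<in> borel_measurable QQ"
proof (cases "m < n")
  case True
  have sm: "(\<lambda>z. snd z m) \<in> borel_measurable QQ"
    unfolding QQ_def Q1_def Q2_def apply measurable using True by auto
  have fm: "(\<lambda>z. fst z k) \<in> borel_measurable QQ" if "k \<in> DD" for k
    unfolding QQ_def Q1_def Q2_def apply measurable using that by auto
  have "(\<lambda>z. sc m * snd z m + wsum m (fst z)) \<in> borel_measurable QQ"
    unfolding wsum_def
    by (intro borel_measurable_add borel_measurable_times borel_measurable_const sm borel_measurable_sum fm)
  moreover have "U m = (\<lambda>z. sc m * snd z m + wsum m (fst z))" unfolding U_def using True by simp
  ultimately show ?thesis by simp
next
  case False
  then have "U m = (\<lambda>z. 0)" unfolding U_def by simp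
  then show ?thesis by simp
qed

lemma comp_meas: "k \<in> I \<Longrightarrow> (\<lambda>x. x k) \<in> borel_measurable (PiM I (\<lambda>_. N01))"
proof -
  assume "k \<in> I"
  then have "(\<lambda>x. x k) \<in> measurable (PiM I (\<lambda>_. N01)) N01" by (rule measurable_component_singleton)
  moreover have "measurable (PiM I (\<lambda>_. N01)) N01 = measurable (PiM I (\<lambda>_. N01)) borel"
    by (rule measurable_cong_sets) auto
  ultimately show ?thesis by simp
qed

definition "beta t k = (\<Sum>m<n. t m * coef n Cv r k m)"

lemma sum_U: "(\<Sum>j<n. t j * U j z) = (\<Sum>k\<in>DD. beta t k * fst z k) + (\<Sum>m<n. (t m * sc m) * snd z m)"
proof -
  have "(\<Sum>j<n. t j * U j z) = (\<Sum>j<n. (t j * sc j) * snd z j + (\<Sum>k\<in>DD. t j * coef n Cv r k j * fst z k))"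
    unfolding U_def wsum_def by (intro sum.cong refl) (simp add: algebra_simps sum_distrib_left)
  also have "\<dots> = (\<Sum>m<n. (t m * sc m) * snd z m) + (\<Sum>j<n. \<Sum>k\<in>DD. t j * coef n Cv r k j * fst z k)"
    by (simp add: sum.distrib)
  also have "(\<Sum>j<n. \<Sum>k\<in>DD. t j * coef n Cv r k j * fst z k) = (\<Sum>k\<in>DD. \<Sum>j<n. t j * coef n Cv r k j * fst z k)"
    by (rule sum.swap)
  also have "\<dots> = (\<Sum>k\<in>DD. beta t k * fst z k)"
    unfolding beta_def by (simp add: sum_distrib_right)
  finally show ?thesis by simp
qed

lemma charU:
  "(\<integral>z. iexp (\<Sum>j<n. t j * U j z) \<partial>QQ) = complex_of_real (exp (- (\<Sum>i<n. \<Sum>j<n. t i * t j * Cv i j) / 2))"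
proof -
  let ?f = "\<lambda>h. iexp (\<Sum>k\<in>DD. beta t k * h k)"
  let ?g = "\<lambda>g. iexp (\<Sum>m<n. (t m * sc m) * g m)"
  have e: "iexp (\<Sum>j<n. t j * U j z) = ?f (fst z) * ?g (snd z)" for z
    unfolding sum_U iexp_add ..
  have fm: "?f \<in> borel_measurable Q2"
  proof -
    have "(\<lambda>h. \<Sum>k\<in>DD. beta t k * h k) \<in> borel_measurable Q2"
      unfolding Q2_def by (intro borel_measurable_sum borel_measurable_times borel_measurable_const comp_meas)
    then show ?thesis by measurable
  qed
  have gm: "?g \<in> borel_measurable Q1"
  proof -
    have "(\<lambda>g. \<Sum>m<n. (t m * sc m) * g m) \<in> borel_measurable Q1"
      unfolding Q1_def by (intro borel_measurable_sum borel_measurable_times borel_measurable_const comp_meas)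
    then show ?thesis by measurable
  qed
  have "(\<integral>z. iexp (\<Sum>j<n. t j * U j z) \<partial>QQ) = (\<integral>z. ?f (fst z) * ?g (snd z) \<partial>(Q2 \<Otimes>\<^sub>M Q1))"
    unfolding QQ_def e ..
  also have "\<dots> = (\<integral>h. ?f h \<partial>Q2) * (\<integral>g. ?g g \<partial>Q1)"
    by (rule pair_mult_integral[OF Q2_prob Q1_prob fm gm]) (simp_all add: norm_exp_i_times)
  also have "\<dots> = complex_of_real (exp (- (\<Sum>k\<in>DD. (beta t k)\<^sup>2) / 2)) * complex_of_real (exp (- (\<Sum>m<n. (t m * sc m)\<^sup>2) / 2))"
  proof -
    have c1: "(\<integral>h. ?f h \<partial>Q2) = complex_of_real (exp (- (\<Sum>k\<in>DD. (beta t k)\<^sup>2) / 2))"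
      unfolding Q2_def by (rule PiN01_char[OF finDD])
    have c2: "(\<integral>g. ?g g \<partial>Q1) = complex_of_real (exp (- (\<Sum>m<n. (t m * sc m)\<^sup>2) / 2))"
      unfolding Q1_def by (rule PiN01_char) simp
    show ?thesis unfolding c1 c2 ..
  qed
  also have "\<dots> = complex_of_real (exp (- ((\<Sum>k\<in>DD. (beta t k)\<^sup>2) + (\<Sum>m<n. (t m * sc m)\<^sup>2)) / 2))"
  proof -
    have h: "- ((\<Sum>k\<in>DD. (beta t k)\<^sup>2) + (\<Sum>m<n. (t m * sc m)\<^sup>2)) / 2
       = - (\<Sum>k\<in>DD. (beta t k)\<^sup>2) / 2 + - (\<Sum>m<n. (t m * sc m)\<^sup>2) / 2" by (simp add: field_simps)
    show ?thesis by (simp only: h exp_add of_real_mult)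
  qed
  also have "(\<Sum>k\<in>DD. (beta t k)\<^sup>2) + (\<Sum>m<n. (t m * sc m)\<^sup>2) = (\<Sum>i<n. \<Sum>j<n. t i * t j * Cv i j)"
  proof -
    have "(\<Sum>k\<in>DD. (beta t k)\<^sup>2) = (\<Sum>i<n. \<Sum>j<n. (\<Sum>m<n. t m * coef n Cv r (i, j) m)\<^sup>2)"
      unfolding DD_def beta_def by (simp add: sum.cartesian_product)
    moreover have "(\<Sum>m<n. (t m * sc m)\<^sup>2) = (\<Sum>m<n. (t m * sqrt ((1 - r) * Cv m m))\<^sup>2)"
      unfolding sc_def ..
    ultimately show ?thesis
      using quad_identity[of Cv n r t] Cv_sym rem0 r1 Cv_nonneg by simp
  qed
  finally show ?thesis .
qed

lemma box_Q:
  assumes z0: "z' \<ge> 0"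
  shows "measure QQ {z \<in> space QQ. \<forall>m<n. \<bar>U m z\<bar> \<le> z'} \<le> (\<Prod>m<n. measure N01 {x. \<bar>sc m * x\<bar> \<le> z'})"
proof -
  interpret Q1: prob_space Q1 by (rule Q1_prob)
  interpret Q2: prob_space Q2 by (rule Q2_prob)
  interpret PP: pair_prob_space Q2 Q1 by (rule QQ_pps)
  interpret F1: finite_product_prob_space "\<lambda>_. N01" "{..<n}" by (rule PiN01_fpps) simp
  interpret N: prob_space N01 by (rule N01_prob)
  define E where "E = {z \<in> space QQ. \<forall>m<n. \<bar>U m z\<bar> \<le> z'}"
  have Es: "E \<in> sets (Q2 \<Otimes>\<^sub>M Q1)" unfolding E_def QQ_def[symmetric] by measurable
  define c where "c = (\<Prod>m<n. measure N01 {x. \<bar>sc m * x\<bar> \<le> z'})"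
  have c0: "c \<ge> 0" unfolding c_def by (simp add: prod_nonneg)
  have sec: "emeasure Q1 (Pair h -` E) \<le> ennreal c" if h: "h \<in> space Q2" for h
  proof -
    define A where "A m = {x. \<bar>sc m * x + wsum m h\<bar> \<le> z'}" for m
    have As: "A m \<in> sets N01" for m unfolding A_def by measurable
    have "Pair h -` E = PiE {..<n} A"
    proof (rule set_eqI, rule iffI)
      fix g assume "g \<in> Pair h -` E"
      then have g: "(h, g) \<in> space QQ" "\<forall>m<n. \<bar>U m (h, g)\<bar> \<le> z'" unfolding E_def by auto
      then have "g \<in> space Q1" unfolding QQ_def by (simp add: space_pair_measure)
      then have gE: "g \<in> extensional {..<n}" unfolding Q1_def by (simp add: space_PiM PiE_def)
      show "g \<in> PiE {..<n} A" unfolding PiE_def Pi_def A_def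
        using gE g(2) by (auto simp: U_def)
    next
      fix g assume g: "g \<in> PiE {..<n} A"
      have "g \<in> space Q1" unfolding Q1_def using g by (auto simp: space_PiM PiE_def Pi_def)
      then have "(h, g) \<in> space QQ" using h unfolding QQ_def by (simp add: space_pair_measure)
      moreover have "\<forall>m<n. \<bar>U m (h, g)\<bar> \<le> z'" using g unfolding A_def U_def by (auto simp: PiE_def Pi_def)
      ultimately show "g \<in> Pair h -` E" unfolding E_def by auto
    qed
    then have "emeasure Q1 (Pair h -` E) = emeasure Q1 (PiE {..<n} A)" by simp
    also have "\<dots> = (\<Prod>m<n. emeasure N01 (A m))"
      unfolding Q1_def by (rule F1.measure_times) (use As in auto)
    also have "\<dots> = (\<Prod>m<n. ennreal (measure N01 (A m)))" by (simp add: F1.M.emeasure_eq_measure)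
    also have "\<dots> = ennreal (\<Prod>m<n. measure N01 (A m))" by (rule prod_ennreal) simp
    also have "\<dots> \<le> ennreal c" unfolding c_def A_def
      by (intro ennreal_leI prod_mono conjI measure_nonneg N01_aff[OF z0])
    finally show ?thesis .
  qed
  have "emeasure QQ E = (\<integral>\<^sup>+h. emeasure Q1 (Pair h -` E) \<partial>Q2)"
    unfolding QQ_def by (rule Q1.emeasure_pair_measure_alt[OF Es])
  also have "\<dots> \<le> (\<integral>\<^sup>+h. ennreal c \<partial>Q2)" by (rule nn_integral_mono) (rule sec)
  also have "\<dots> = ennreal c" by (simp add: Q2.emeasure_space_1)
  finally have "emeasure QQ E \<le> ennreal c" .
  then have "measure QQ E \<le> c" unfolding measure_def using c0 by (simp add: enn2real_leI)
  then show ?thesis unfolding E_def c_def .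
qed

end


context gvec_r begin

lemma sr_pos: "sqrt (1 - r) > 0" using r1 by simp

lemma comp_prob:
  assumes m: "m < n" and c: "c \<ge> 0"
  shows "measure N01 {x. \<bar>sc m * x\<bar> \<le> c} = measure M {\<omega> \<in> space M. \<bar>X m \<omega>\<bar> \<le> c / sqrt (1 - r)}"
proof -
  have Sm[measurable]: "X m \<in> borel_measurable M" using m by simp
  obtain \<sigma> where s0: "\<sigma> \<ge> 0" and L: "distr M lborel (X m) = distr N01 lborel (\<lambda>x. \<sigma> * x)"
    using cg_law[OF prob_space_axioms comp_cg[OF m]] by blast
  have m2: "(\<integral>x. x ^ 2 \<partial>N01) = 1"
    using std_normal_distribution_even_moments(1)[of 1] by simp
  have "Cv m m = (\<integral>\<omega>. (X m \<omega>)\<^sup>2 \<partial>M)" unfolding Cv_def by (simp add: power2_eq_square)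
  also have "\<dots> = (\<integral>x. (\<sigma> * x)\<^sup>2 \<partial>N01)" by (rule law_integral[OF L Sm]) auto
  also have "\<dots> = \<sigma>\<^sup>2" using m2 by (simp add: power_mult_distrib)
  finally have v: "Cv m m = \<sigma>\<^sup>2" .
  have scm: "sc m = sqrt (1 - r) * \<sigma>" unfolding sc_def v using s0 r1 by (simp add: real_sqrt_mult)
  have "measure M {\<omega> \<in> space M. \<bar>X m \<omega>\<bar> \<le> c / sqrt (1 - r)} = measure M {\<omega> \<in> space M. X m \<omega> \<in> {y. \<bar>y\<bar> \<le> c / sqrt (1 - r)}}"
    by simp
  also have "\<dots> = measure N01 {x. \<sigma> * x \<in> {y. \<bar>y\<bar> \<le> c / sqrt (1 - r)}}"
    by (rule law_measure[OF L Sm]) measurable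
  also have "{x. \<sigma> * x \<in> {y. \<bar>y\<bar> \<le> c / sqrt (1 - r)}} = {x. \<bar>sc m * x\<bar> \<le> c}"
  proof -
    have "\<bar>\<sigma> * x\<bar> \<le> c / sqrt (1 - r) \<longleftrightarrow> \<bar>sc m * x\<bar> \<le> c" for x
    proof -
      have "\<bar>sc m * x\<bar> = \<bar>\<sigma> * x\<bar> * sqrt (1 - r)" unfolding scm using sr_pos by (simp add: abs_mult)
      then show ?thesis using pos_le_divide_eq[OF sr_pos] by simp
    qed
    then show ?thesis by auto
  qed
  finally show ?thesis by simp
qed

lemma right_cont:
  assumes m: "m < n"
  shows "(\<lambda>k. measure M {\<omega> \<in> space M. \<bar>X m \<omega>\<bar> \<le> (z + 1 / Suc k) / sqrt (1 - r)})
          \<longlonglongrightarrow> measure M {\<omega> \<in> space M. \<bar>X m \<omega>\<bar> \<le> z / sqrt (1 - r)}"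
proof -
  have Sm[measurable]: "X m \<in> borel_measurable M" using m by simp
  let ?A = "\<lambda>k::nat. {\<omega> \<in> space M. \<bar>X m \<omega>\<bar> \<le> (z + 1 / Suc k) / sqrt (1 - r)}"
  have "(\<lambda>k. measure M (?A k)) \<longlonglongrightarrow> measure M (\<Inter>k. ?A k)"
  proof (rule finite_Lim_measure_decseq)
    show "range ?A \<subseteq> sets M" by auto
    show "decseq ?A"
    proof (rule decseq_SucI)
      fix k
      have "(z + 1 / Suc (Suc k)) / sqrt (1 - r) \<le> (z + 1 / Suc k) / sqrt (1 - r)"
        using sr_pos by (intro divide_right_mono add_left_mono) (auto simp: frac_le)
      then show "?A (Suc k) \<subseteq> ?A k" by auto
    qed
  qed
  moreover have "(\<Inter>k. ?A k) = {\<omega> \<in> space M. \<bar>X m \<omega>\<bar> \<le> z / sqrt (1 - r)}"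
  proof (rule set_eqI, rule iffI)
    fix \<omega> assume a: "\<omega> \<in> (\<Inter>k. ?A k)"
    then have sp: "\<omega> \<in> space M" by auto
    have "\<forall>k. \<bar>X m \<omega>\<bar> * sqrt (1 - r) \<le> z + 1 / Suc k"
      using a sr_pos by (auto simp: pos_le_divide_eq)
    moreover have "(\<lambda>k. z + 1 / Suc k) \<longlonglongrightarrow> z + 0"
      by (intro tendsto_add tendsto_const) (use LIMSEQ_inverse_real_of_nat in \<open>simp add: inverse_eq_divide\<close>)
    ultimately have "\<bar>X m \<omega>\<bar> * sqrt (1 - r) \<le> z"
      by (intro LIMSEQ_le_const[where X="\<lambda>k. z + 1 / Suc k"]) auto
    then show "\<omega> \<in> {\<omega> \<in> space M. \<bar>X m \<omega>\<bar> \<le> z / sqrt (1 - r)}"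
      using sp sr_pos by (simp add: pos_le_divide_eq)
  next
    fix \<omega> assume "\<omega> \<in> {\<omega> \<in> space M. \<bar>X m \<omega>\<bar> \<le> z / sqrt (1 - r)}"
    moreover have "z / sqrt (1 - r) \<le> (z + 1 / Suc k) / sqrt (1 - r)" for k
      using sr_pos by (intro divide_right_mono) auto
    ultimately show "\<omega> \<in> (\<Inter>k. ?A k)" by (auto intro: order_trans)
  qed
  ultimately show ?thesis by simp
qed

lemma final:
  assumes z: "z > 0"
  shows "measure M {\<omega> \<in> space M. \<forall>j<n. \<bar>X j \<omega>\<bar> \<le> z}
           \<le> (\<Prod>j<n. measure M {\<omega> \<in> space M. \<bar>X j \<omega>\<bar> \<le> z / sqrt (1 - r)})"
proof -
  define XX where "XX j = (if j < n then X j else (\<lambda>_. 0))" for j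
  have XXm: "XX j \<in> borel_measurable M" for j unfolding XX_def by (cases "j < n") auto
  have ch: "(\<integral>\<omega>. iexp (\<Sum>j<n. t j * XX j \<omega>) \<partial>M) = (\<integral>\<omega>. iexp (\<Sum>j<n. t j * U j \<omega>) \<partial>QQ)" for t
  proof -
    have "(\<Sum>j<n. t j * XX j \<omega>) = (\<Sum>j<n. t j * X j \<omega>)" for \<omega>
      by (intro sum.cong) (auto simp: XX_def)
    then have "(\<integral>\<omega>. iexp (\<Sum>j<n. t j * XX j \<omega>) \<partial>M) = (\<integral>\<omega>. iexp (\<Sum>j<n. t j * X j \<omega>) \<partial>M)" by simp
    also have "\<dots> = (\<integral>\<omega>. iexp (\<Sum>j<n. t j * U j \<omega>) \<partial>QQ)" unfolding char_X charU ..
    finally show ?thesis .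
  qed
  have tv: "twovec M QQ XX U n"
    unfolding twovec_def twovec_axioms_def using prob_space_axioms QQ_prob XXm U_meas ch by blast
  have bnd: "measure M {\<omega> \<in> space M. \<forall>j<n. \<bar>X j \<omega>\<bar> \<le> z}
      \<le> (\<Prod>j<n. measure M {\<omega> \<in> space M. \<bar>X j \<omega>\<bar> \<le> (z + 1 / Suc k) / sqrt (1 - r)})" for k
  proof -
    have "{\<omega> \<in> space M. \<forall>j<n. \<bar>X j \<omega>\<bar> \<le> z} = {\<omega> \<in> space M. \<forall>j<n. \<bar>XX j \<omega>\<bar> \<le> z}"
      by (auto simp: XX_def)
    then have "measure M {\<omega> \<in> space M. \<forall>j<n. \<bar>X j \<omega>\<bar> \<le> z} = measure M {\<omega> \<in> space M. \<forall>j<n. \<bar>XX j \<omega>\<bar> \<le> z}"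
      by simp
    also have "\<dots> \<le> measure QQ {\<omega> \<in> space QQ. \<forall>j<n. \<bar>U j \<omega>\<bar> \<le> z + 1 / Suc k}"
      by (rule twovec.box_le[OF tv]) (use z in auto)
    also have "\<dots> \<le> (\<Prod>m<n. measure N01 {x. \<bar>sc m * x\<bar> \<le> z + 1 / Suc k})"
      by (rule box_Q) (use z in \<open>auto intro: add_nonneg_nonneg\<close>)
    also have "\<dots> = (\<Prod>j<n. measure M {\<omega> \<in> space M. \<bar>X j \<omega>\<bar> \<le> (z + 1 / Suc k) / sqrt (1 - r)})"
      by (intro prod.cong refl comp_prob) (use z in auto)
    finally show ?thesis .
  qed
  have lim: "(\<lambda>k. \<Prod>j<n. measure M {\<omega> \<in> space M. \<bar>X j \<omega>\<bar> \<le> (z + 1 / Suc k) / sqrt (1 - r)})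
      \<longlonglongrightarrow> (\<Prod>j<n. measure M {\<omega> \<in> space M. \<bar>X j \<omega>\<bar> \<le> z / sqrt (1 - r)})"
    by (intro tendsto_prod right_cont) auto
  show ?thesis by (rule LIMSEQ_le_const[OF lim]) (use bnd in auto)
qed

end


theorem mainTheorem16:
  fixes M :: "'a measure" and n :: nat and X :: "nat \<Rightarrow> 'a \<Rightarrow> real" and r z :: real
  assumes "prob_space M"
    and "centered_gaussian_vector M n X"
    and "r < 1"
    and "\<And>i. i < n \<Longrightarrow>
          (\<Sum>j\<in>{..<n} - {i}. \<bar>integral\<^sup>L M (\<lambda>\<omega>. X i \<omega> * X j \<omega>)\<bar>)
            \<le> r * integral\<^sup>L M (\<lambda>\<omega>. (X i \<omega>)\<^sup>2)"
    and "z > 0"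
  shows "measure M {\<omega> \<in> space M. \<forall>j<n. \<bar>X j \<omega>\<bar> \<le> z}
           \<le> (\<Prod>j<n. measure M {\<omega> \<in> space M. \<bar>X j \<omega>\<bar> \<le> z / sqrt (1 - r)})"
proof -
  interpret gvec M n X using assms(1,2) by (simp add: gvec_def gvec_axioms_def)
  have hC: "(\<Sum>j\<in>{..<n}-{i}. \<bar>Cv i j\<bar>) \<le> r * Cv i i" if "i < n" for i
    using assms(4)[OF that] unfolding Cv_def by (simp add: power2_eq_square)
  interpret gvec_r M n X r by unfold_locales (use assms(3) hC in auto)
  show ?thesis by (rule final[OF assms(5)])
qed

end
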